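(* Let $G$ be a group and $\mathcal F$ a family of subgroups with $G$ of type $FP_{2,\mathcal F}$. The growth rate (equivalence class under $\preceq$) of $\mathrm{FV}_{G,\mathcal F}$ is independent of the choice of $FP_{2,\mathcal F}$-resolution and of the filling norms used to define it; i.e. it is an invariant of the pair $(G,\mathcal F)$.
   Context: Bredon: $\mathcal O_{\mathcal F}(G)$-modules are contravariant functors from the orbit category (objects $G/K$, $K\in\mathcal F$; morphisms $G$-maps) to abelian groups; for a $G$-set $S$ with isotropy in $\mathcal F$, $\mathbb Z[\cdot,S]:G/K\mapsto\mathbb Z[S^K]$ is free (finitely generated if $S/G$ finite); $\mathbb Z_{G,\mathcal F}=\mathbb Z[\cdot,G/G]$. Type $FP_{2,\mathcal F}$: there is a projective resolution $\cdots\to P_2\to P_1\to P_0\to\mathbb Z_{G,\mathcal F}\to0$ with $P_0,P_1,P_2$ finitely generated (an $FP_{2,\mathcal F}$-resolution). Filling norms: for a free $\mathbb ZG$-module with basis $B$, $\|\cdot\|_1$ is the $\ell_1$-norm for the $\mathbb Z$-basis $\{gb\}$; for a finitely generated $\mathbb ZG$-module $M$ and surjection $\eta:F\to M$ from a finitely generated based free module, $\|m\|_\eta=\min\{\|x\|_1:\eta(x)=m\}$ is a filling norm on $M$. $\mathrm{FV}_{G,\mathcal F}$: evaluating an $FP_{2,\mathcal F}$-resolution at $G/1$ gives an exact sequence of finitely generated $\mathbb ZG$-modules $P_2\xrightarrow{\partial_2}P_1\xrightarrow{\partial_1}P_0\to\mathbb Z\to0$; with filling norms on $P_1,P_2$,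 $\mathrm{FV}_{G,\mathcal F}(k)=\max\{\|\gamma\|_{\partial_2}:\gamma\in\ker\partial_1,\|\gamma\|_{P_1}\le k\}$, $\|\gamma\|_{\partial_2}=\min\{\|\mu\|_{P_2}:\partial_2\mu=\gamma\}$. $f\preceq g$ means $\exists C>0$: $f(n)\le Cg(Cn+C)+Cn+C$ for all $n$; $f,g$ are equivalent if $f\preceq g$ and $g\preceq f$. *)

theory Defs
  imports "HOL-Algebra.Coset" "HOL-Library.Extended_Nat" "HOL-Library.Function_Algebras"
begin

definition family :: "('a, 'z) monoid_scheme \<Rightarrow> 'a set set \<Rightarrow> bool" where
  "family G F \<longleftrightarrow> F \<noteq> {} \<and> (\<forall>H\<in>F. subgroup H G)
     \<and> (\<forall>H\<in>F. \<forall>g\<in>carrier G. (g <#\<^bsub>G\<^esub> H) #>\<^bsub>G\<^esub> inv\<^bsub>G\<^esub> g \<in> F)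
     \<and> (\<forall>H\<in>F. \<forall>K. subgroup K G \<and> K \<subseteq> H \<longrightarrow> K \<in> F)"

definition lcos :: "('a, 'z) monoid_scheme \<Rightarrow> 'a set \<Rightarrow> 'a set set" where
  "lcos G K = (\<lambda>x. x <#\<^bsub>G\<^esub> K) ` carrier G"

text \<open>G-maps G/K \<rightarrow> G/L (morphisms of the orbit category), as extensional functions.\<close>
definition Gmap :: "('a, 'z) monoid_scheme \<Rightarrow> 'a set \<Rightarrow> 'a set \<Rightarrow> ('a set \<Rightarrow> 'a set) \<Rightarrow> bool" where
  "Gmap G K L \<phi> \<longleftrightarrow> \<phi> \<in> lcos G K \<rightarrow>\<^sub>E lcos G L
     \<and> (\<forall>g\<in>carrier G. \<forall>c\<in>lcos G K. \<phi> (g <#\<^bsub>G\<^esub> c) = g <#\<^bsub>G\<^esub> \<phi> c)"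

text \<open>Values at G/K (indexed by K) are additive subgroups of a fixed abelian group type;
  om M phi K L : M(G/L) \<rightarrow> M(G/K) for phi : G/K \<rightarrow> G/L.\<close>
record ('a, 'm) omod =
  oc :: "'a set \<Rightarrow> 'm set"
  om :: "('a set \<Rightarrow> 'a set) \<Rightarrow> 'a set \<Rightarrow> 'a set \<Rightarrow> 'm \<Rightarrow> 'm"

definition is_omod :: "('a, 'z) monoid_scheme \<Rightarrow> 'a set set \<Rightarrow> ('a, 'm::ab_group_add) omod \<Rightarrow> bool" where
  "is_omod G F M \<longleftrightarrow>
     (\<forall>K\<in>F. 0 \<in> oc M K \<and> (\<forall>x\<in>oc M K. \<forall>y\<in>oc M K. x + y \<in> oc M K \<and> - x \<in> oc M K))
   \<and> (\<forall>K\<in>F. \<forall>L\<in>F. \<forall>\<phi>. Gmap G K L \<phi> \<longrightarrow>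
        (\<forall>x\<in>oc M L. om M \<phi> K L x \<in> oc M K)
      \<and> (\<forall>x\<in>oc M L. \<forall>y\<in>oc M L. om M \<phi> K L (x + y) = om M \<phi> K L x + om M \<phi> K L y))
   \<and> (\<forall>K\<in>F. \<forall>x\<in>oc M K. om M (restrict id (lcos G K)) K K x = x)
   \<and> (\<forall>K\<in>F. \<forall>L\<in>F. \<forall>J\<in>F. \<forall>\<phi> \<psi>. Gmap G K L \<phi> \<longrightarrow> Gmap G L J \<psi> \<longrightarrow>
        (\<forall>x\<in>oc M J. om M (restrict (\<psi> \<circ> \<phi>) (lcos G K)) K J x = om M \<phi> K L (om M \<psi> L J x)))"

definition is_hom :: "('a, 'z) monoid_scheme \<Rightarrow> 'a set set \<Rightarrow> ('a, 'm::ab_group_add) omod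
    \<Rightarrow> ('a, 'n::ab_group_add) omod \<Rightarrow> ('a set \<Rightarrow> 'm \<Rightarrow> 'n) \<Rightarrow> bool" where
  "is_hom G F M N f \<longleftrightarrow>
     (\<forall>K\<in>F. (\<forall>x\<in>oc M K. f K x \<in> oc N K)
        \<and> (\<forall>x\<in>oc M K. \<forall>y\<in>oc M K. f K (x + y) = f K x + f K y))
   \<and> (\<forall>K\<in>F. \<forall>L\<in>F. \<forall>\<phi>. Gmap G K L \<phi> \<longrightarrow>
        (\<forall>x\<in>oc M L. f K (om M \<phi> K L x) = om N \<phi> K L (f L x)))"

definition Gset :: "('a, 'z) monoid_scheme \<Rightarrow> ('a \<Rightarrow> 's \<Rightarrow> 's) \<Rightarrow> 's set \<Rightarrow> bool" where
  "Gset G act S \<longleftrightarrow> (\<forall>g\<in>carrier G. \<forall>s\<in>S. act g s \<in> S) \<and> (\<forall>s\<in>S. act \<one>\<^bsub>G\<^esub> s = s)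
     \<and> (\<forall>g\<in>carrier G. \<forall>h\<in>carrier G. \<forall>s\<in>S. act (g \<otimes>\<^bsub>G\<^esub> h) s = act g (act h s))"

definition isotropy_in :: "('a, 'z) monoid_scheme \<Rightarrow> 'a set set \<Rightarrow> ('a \<Rightarrow> 's \<Rightarrow> 's) \<Rightarrow> 's set \<Rightarrow> bool" where
  "isotropy_in G F act S \<longleftrightarrow> (\<forall>s\<in>S. {g\<in>carrier G. act g s = s} \<in> F)"

definition fixpts :: "('a, 'z) monoid_scheme \<Rightarrow> ('a \<Rightarrow> 's \<Rightarrow> 's) \<Rightarrow> 's set \<Rightarrow> 'a set \<Rightarrow> 's set" where
  "fixpts G act S K = {s\<in>S. \<forall>k\<in>K. act k s = s}"

definition free_oc :: "('a, 'z) monoid_scheme \<Rightarrow> ('a \<Rightarrow> 's \<Rightarrow> 's) \<Rightarrow> 's set \<Rightarrow> 'a set \<Rightarrow> ('s \<Rightarrow> int) set" where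
  "free_oc G act S K = {c. finite {s. c s \<noteq> 0} \<and> {s. c s \<noteq> 0} \<subseteq> fixpts G act S K}"

text \<open>For phi : G/K \<rightarrow> G/L with phi(K) = gL, the induced map S^L \<rightarrow> S^K is s \<mapsto> g s,
  extended linearly to Z[S^L] \<rightarrow> Z[S^K].\<close>
definition free_om :: "('a, 'z) monoid_scheme \<Rightarrow> ('a \<Rightarrow> 's \<Rightarrow> 's)
    \<Rightarrow> ('a set \<Rightarrow> 'a set) \<Rightarrow> 'a set \<Rightarrow> 'a set \<Rightarrow> ('s \<Rightarrow> int) \<Rightarrow> ('s \<Rightarrow> int)" where
  "free_om G act \<phi> K L c =
     (let g = (SOME g. g \<in> carrier G \<and> \<phi> K = g <#\<^bsub>G\<^esub> L)
      in (\<lambda>t. \<Sum>s\<in>{s. c s \<noteq> 0 \<and> act g s = t}. c s))"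

definition free_mod :: "('a, 'z) monoid_scheme \<Rightarrow> ('a \<Rightarrow> 's \<Rightarrow> 's) \<Rightarrow> 's set \<Rightarrow> ('a, 's \<Rightarrow> int) omod" where
  "free_mod G act S = \<lparr>oc = free_oc G act S, om = free_om G act\<rparr>"

text \<open>The constant module Z_{G,F} = Z[-, G/G].\<close>
definition Zmod :: "('a, 'z) monoid_scheme \<Rightarrow> ('a, 'a set \<Rightarrow> int) omod" where
  "Zmod G = free_mod G (\<lambda>g c. g <#\<^bsub>G\<^esub> c) {carrier G}"

text \<open>Projective = direct summand (retract) of a free module Z[-,S], S a G-set with isotropy in F.
  The index type of S is big enough to contain the canonical G-set of generators of M.\<close>
definition projective :: "('a, 'z) monoid_scheme \<Rightarrow> 'a set set \<Rightarrow> ('a, 'm::ab_group_add) omod \<Rightarrow> bool" where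
  "projective G F M \<longleftrightarrow> (\<exists>(S :: ('a set \<times> 'a set \<times> 'm) set) act i r.
      Gset G act S \<and> isotropy_in G F act S
    \<and> is_hom G F M (free_mod G act S) i \<and> is_hom G F (free_mod G act S) M r
    \<and> (\<forall>K\<in>F. \<forall>x\<in>oc M K. r K (i K x) = x))"

inductive_set agen :: "'m::ab_group_add set \<Rightarrow> 'm set" for A where
  agen_zero: "0 \<in> agen A"
| agen_add: "a \<in> A \<Longrightarrow> x \<in> agen A \<Longrightarrow> x + a \<in> agen A"
| agen_diff: "a \<in> A \<Longrightarrow> x \<in> agen A \<Longrightarrow> x - a \<in> agen A"

definition fin_gen :: "('a, 'z) monoid_scheme \<Rightarrow> 'a set set \<Rightarrow> ('a, 'm::ab_group_add) omod \<Rightarrow> bool" where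
  "fin_gen G F M \<longleftrightarrow> (\<exists>X. finite X \<and> X \<subseteq> Sigma F (oc M)
     \<and> (\<forall>L\<in>F. oc M L \<subseteq> agen {om M \<phi> L K x | \<phi> K x. (K, x) \<in> X \<and> Gmap G L K \<phi>}))"

definition exact_at :: "'a set set \<Rightarrow> ('a set \<Rightarrow> 'm::ab_group_add set) \<Rightarrow> ('a set \<Rightarrow> 'l \<Rightarrow> 'm)
    \<Rightarrow> ('a set \<Rightarrow> 'l set) \<Rightarrow> ('a set \<Rightarrow> 'm \<Rightarrow> 'n::ab_group_add) \<Rightarrow> bool" where
  "exact_at F Mc f Lc g \<longleftrightarrow> (\<forall>K\<in>F. {x\<in>Mc K. g K x = 0} = f K ` Lc K)"

text \<open>Projective resolution  ... \<rightarrow> P 2 \<rightarrow> P 1 \<rightarrow> P 0 \<rightarrow> Z_{G,F} \<rightarrow> 0, with d n : P (n+1) \<rightarrow> P n.\<close>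
definition proj_res :: "('a, 'z) monoid_scheme \<Rightarrow> 'a set set \<Rightarrow> (nat \<Rightarrow> ('a, 'm::ab_group_add) omod)
    \<Rightarrow> (nat \<Rightarrow> 'a set \<Rightarrow> 'm \<Rightarrow> 'm) \<Rightarrow> ('a set \<Rightarrow> 'm \<Rightarrow> ('a set \<Rightarrow> int)) \<Rightarrow> bool" where
  "proj_res G F P d eps \<longleftrightarrow>
     (\<forall>n. is_omod G F (P n) \<and> projective G F (P n))
   \<and> (\<forall>n. is_hom G F (P (Suc n)) (P n) (d n))
   \<and> is_hom G F (P 0) (Zmod G) eps
   \<and> (\<forall>K\<in>F. eps K ` oc (P 0) K = oc (Zmod G) K)
   \<and> exact_at F (oc (P 0)) (d 0) (oc (P 1)) eps
   \<and> (\<forall>n. exact_at F (oc (P (Suc n))) (d (Suc n)) (oc (P (Suc (Suc n)))) (d n))"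

definition FP2_res :: "('a, 'z) monoid_scheme \<Rightarrow> 'a set set \<Rightarrow> (nat \<Rightarrow> ('a, 'm::ab_group_add) omod)
    \<Rightarrow> (nat \<Rightarrow> 'a set \<Rightarrow> 'm \<Rightarrow> 'm) \<Rightarrow> ('a set \<Rightarrow> 'm \<Rightarrow> ('a set \<Rightarrow> int)) \<Rightarrow> bool" where
  "FP2_res G F P d eps \<longleftrightarrow> proj_res G F P d eps
     \<and> fin_gen G F (P 0) \<and> fin_gen G F (P 1) \<and> fin_gen G F (P 2)"

text \<open>The ZG-module structure on M(G/1): g acts via the G-map G/1 \<rightarrow> G/1, x \<mapsto> x g.\<close>
definition gact :: "('a, 'z) monoid_scheme \<Rightarrow> ('a, 'm) omod \<Rightarrow> 'a \<Rightarrow> 'm \<Rightarrow> 'm" where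
  "gact G M g = om M (restrict (\<lambda>c. c #>\<^bsub>G\<^esub> g) (lcos G {\<one>\<^bsub>G\<^esub>})) {\<one>\<^bsub>G\<^esub>} {\<one>\<^bsub>G\<^esub>}"

text \<open>Based free ZG-module with basis B: finitely supported c : G \<times> B \<rightarrow> Z, c = \<Sum> c(g,b) g b.\<close>
definition freeZG :: "('a, 'z) monoid_scheme \<Rightarrow> 'b set \<Rightarrow> ('a \<times> 'b \<Rightarrow> int) set" where
  "freeZG G B = {c. finite {p. c p \<noteq> 0} \<and> {p. c p \<noteq> 0} \<subseteq> carrier G \<times> B}"

definition freeZG_act :: "('a, 'z) monoid_scheme \<Rightarrow> 'a \<Rightarrow> ('a \<times> 'b \<Rightarrow> int) \<Rightarrow> ('a \<times> 'b \<Rightarrow> int)" where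
  "freeZG_act G h c = (\<lambda>(g, b). if g \<in> carrier G then c (inv\<^bsub>G\<^esub> h \<otimes>\<^bsub>G\<^esub> g, b) else 0)"

definition l1norm :: "('a \<times> 'b \<Rightarrow> int) \<Rightarrow> nat" where
  "l1norm c = (\<Sum>p\<in>{p. c p \<noteq> 0}. nat \<bar>c p\<bar>)"

definition filling_map :: "('a, 'z) monoid_scheme \<Rightarrow> 'b set \<Rightarrow> 'm::ab_group_add set
    \<Rightarrow> ('a \<Rightarrow> 'm \<Rightarrow> 'm) \<Rightarrow> (('a \<times> 'b \<Rightarrow> int) \<Rightarrow> 'm) \<Rightarrow> bool" where
  "filling_map G B A \<alpha> \<eta> \<longleftrightarrow> finite B
     \<and> (\<forall>c\<in>freeZG G B. \<forall>c'\<in>freeZG G B. \<eta> (c + c') = \<eta> c + \<eta> c')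
     \<and> (\<forall>h\<in>carrier G. \<forall>c\<in>freeZG G B. \<eta> (freeZG_act G h c) = \<alpha> h (\<eta> c))
     \<and> \<eta> ` freeZG G B = A"

definition fill_norm :: "('a, 'z) monoid_scheme \<Rightarrow> 'b set \<Rightarrow> (('a \<times> 'b \<Rightarrow> int) \<Rightarrow> 'm) \<Rightarrow> 'm \<Rightarrow> nat" where
  "fill_norm G B \<eta> m = (LEAST n. \<exists>c\<in>freeZG G B. \<eta> c = m \<and> l1norm c = n)"

definition FV :: "('a, 'z) monoid_scheme \<Rightarrow> (nat \<Rightarrow> ('a, 'm::ab_group_add) omod) \<Rightarrow> (nat \<Rightarrow> 'a set \<Rightarrow> 'm \<Rightarrow> 'm)
    \<Rightarrow> 'b set \<Rightarrow> (('a \<times> 'b \<Rightarrow> int) \<Rightarrow> 'm) \<Rightarrow> 'c set \<Rightarrow> (('a \<times> 'c \<Rightarrow> int) \<Rightarrow> 'm) \<Rightarrow> nat \<Rightarrow> enat" where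
  "FV G P d B1 \<eta>1 B2 \<eta>2 k =
     Sup ((\<lambda>\<gamma>. enat (LEAST n. \<exists>\<mu>\<in>oc (P 2) {\<one>\<^bsub>G\<^esub>}. d 1 {\<one>\<^bsub>G\<^esub>} \<mu> = \<gamma> \<and> fill_norm G B2 \<eta>2 \<mu> = n))
          ` {\<gamma>\<in>oc (P 1) {\<one>\<^bsub>G\<^esub>}. d 0 {\<one>\<^bsub>G\<^esub>} \<gamma> = 0 \<and> fill_norm G B1 \<eta>1 \<gamma> \<le> k})"

definition preceq :: "(nat \<Rightarrow> enat) \<Rightarrow> (nat \<Rightarrow> enat) \<Rightarrow> bool" where
  "preceq f g \<longleftrightarrow> (\<exists>C::nat. C > 0 \<and> (\<forall>n. f n \<le> enat C * g (C * n + C) + enat (C * n + C)))"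

definition growth_equiv :: "(nat \<Rightarrow> enat) \<Rightarrow> (nat \<Rightarrow> enat) \<Rightarrow> bool" where
  "growth_equiv f g \<longleftrightarrow> preceq f g \<and> preceq g f"

end

theory Submission
  imports Defs
begin


definition nsc :: "nat \<Rightarrow> 'm::ab_group_add \<Rightarrow> 'm" where
  "nsc n x = ((\<lambda>y. y + x) ^^ n) 0"

lemma nsc_0[simp]: "nsc 0 x = 0" by (simp add: nsc_def)
lemma nsc_Suc[simp]: "nsc (Suc n) x = nsc n x + x" by (simp add: nsc_def)
lemma nsc_add: "nsc (m + n) x = nsc m x + nsc n x"
  by (induction n) (auto simp: add.assoc)
lemma nsc_plus: "nsc n (x + y) = nsc n x + nsc n y"
  by (induction n) (auto simp: algebra_simps)
lemma nsc_fun: "nsc n (f :: 's \<Rightarrow> int) = (\<lambda>t. int n * f t)"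
  by (induction n) (auto simp: algebra_simps)

definition zsc :: "int \<Rightarrow> 'm::ab_group_add \<Rightarrow> 'm" where
  "zsc n x = nsc (nat n) x - nsc (nat (- n)) x"

lemma zsc_eq: assumes "int p - int q = n" shows "zsc n x = nsc p x - nsc q x"
proof -
  have "nat n + q = p + nat (-n)" using assms by linarith
  hence "nsc (nat n + q) x = nsc (p + nat (-n)) x" by simp
  hence "nsc (nat n) x + nsc q x = nsc p x + nsc (nat (-n)) x" by (simp add: nsc_add)
  thus ?thesis unfolding zsc_def by (simp add: algebra_simps)
qed

lemma zsc_add: "zsc (m + n) x = zsc m x + zsc n x"
proof -
  have "zsc (m+n) x = nsc (nat m + nat n) x - nsc (nat (-m) + nat (-n)) x"
    by (rule zsc_eq) linarith
  thus ?thesis unfolding zsc_def by (simp add: nsc_add algebra_simps)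
qed

lemma zsc_0[simp]: "zsc 0 x = 0" by (simp add: zsc_def)
lemma zsc_1[simp]: "zsc 1 x = x" by (simp add: zsc_def)
lemma zsc_zero[simp]: "zsc n 0 = 0"
proof -
  have "nsc m (0::'a) = 0" for m :: nat by (induction m) auto
  thus ?thesis by (simp add: zsc_def)
qed
lemma zsc_plus: "zsc n (x + y) = zsc n x + zsc n y"
  by (simp add: zsc_def nsc_plus algebra_simps)
lemma zsc_fun: "zsc n (f :: 's \<Rightarrow> int) = (\<lambda>t. n * f t)"
  by (rule ext) (simp add: zsc_def nsc_fun algebra_simps)

definition addclosed :: "'m::ab_group_add set \<Rightarrow> bool" where
  "addclosed A \<longleftrightarrow> 0 \<in> A \<and> (\<forall>x\<in>A. \<forall>y\<in>A. x + y \<in> A \<and> - x \<in> A)"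

definition addhom :: "'m::ab_group_add set \<Rightarrow> ('m \<Rightarrow> 'n::ab_group_add) \<Rightarrow> bool" where
  "addhom A f \<longleftrightarrow> (\<forall>x\<in>A. \<forall>y\<in>A. f (x + y) = f x + f y)"

lemma addclosed_diff: "addclosed A \<Longrightarrow> x \<in> A \<Longrightarrow> y \<in> A \<Longrightarrow> x - y \<in> A"
  unfolding addclosed_def by (metis diff_conv_add_uminus)

lemma nsc_closed: "addclosed A \<Longrightarrow> x \<in> A \<Longrightarrow> nsc n x \<in> A"
  by (induction n) (auto simp: addclosed_def)
lemma zsc_closed: "addclosed A \<Longrightarrow> x \<in> A \<Longrightarrow> zsc n x \<in> A"
  unfolding zsc_def by (intro addclosed_diff nsc_closed)

lemma addhom_0: "addclosed A \<Longrightarrow> addhom A f \<Longrightarrow> f 0 = 0"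
  unfolding addclosed_def addhom_def by (metis add_cancel_right_right add_0)
lemma addhom_neg: "addclosed A \<Longrightarrow> addhom A f \<Longrightarrow> x \<in> A \<Longrightarrow> f (- x) = - f x"
proof -
  assume a: "addclosed A" "addhom A f" "x \<in> A"
  hence "f (x + - x) = f x + f (- x)" unfolding addclosed_def addhom_def by blast
  moreover have "f 0 = 0" using addhom_0 a by blast
  ultimately show ?thesis by (simp add: eq_neg_iff_add_eq_0 add.commute)
qed
lemma addhom_diff: "addclosed A \<Longrightarrow> addhom A f \<Longrightarrow> x \<in> A \<Longrightarrow> y \<in> A \<Longrightarrow> f (x - y) = f x - f y"
proof -
  assume a: "addclosed A" "addhom A f" "x \<in> A" "y \<in> A"
  hence "-y \<in> A" by (auto simp: addclosed_def)
  hence "f (x + - y) = f x + f (- y)" using a by (auto simp: addhom_def)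
  thus ?thesis using addhom_neg[OF a(1,2,4)] by simp
qed
lemma addhom_nsc: "addclosed A \<Longrightarrow> addhom A f \<Longrightarrow> x \<in> A \<Longrightarrow> f (nsc n x) = nsc n (f x)"
proof (induction n)
  case 0 thus ?case using addhom_0 by simp
next
  case (Suc n)
  have "nsc n x \<in> A" using nsc_closed Suc.prems by blast
  thus ?case using Suc by (simp add: addhom_def)
qed
lemma addhom_zsc: "addclosed A \<Longrightarrow> addhom A f \<Longrightarrow> x \<in> A \<Longrightarrow> f (zsc n x) = zsc n (f x)"
  unfolding zsc_def by (simp add: addhom_diff nsc_closed addhom_nsc)

lemma sum_closed: "addclosed A \<Longrightarrow> (\<And>s. s \<in> T \<Longrightarrow> g s \<in> A) \<Longrightarrow> sum g T \<in> A"
proof (induction T rule: infinite_finite_induct)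
  case (infinite A) thus ?case by (simp add: addclosed_def)
next case empty thus ?case by (simp add: addclosed_def)
next case (insert x F) thus ?case by (simp add: addclosed_def)
qed

lemma addhom_sum: "addclosed A \<Longrightarrow> addhom A f \<Longrightarrow> (\<And>s. s \<in> T \<Longrightarrow> g s \<in> A)
   \<Longrightarrow> f (sum g T) = (\<Sum>s\<in>T. f (g s))"
proof (induction T rule: infinite_finite_induct)
  case (infinite A) thus ?case using addhom_0 by simp
next case empty thus ?case using addhom_0 by simp
next case (insert x F)
  have "sum g F \<in> A" using sum_closed insert by blast
  thus ?case using insert by (simp add: addhom_def)
qed



lemma supp_fin_sum: "finite T \<Longrightarrow> {p. c p \<noteq> 0} \<subseteq> T \<Longrightarrow> l1norm c = (\<Sum>p\<in>T. nat \<bar>c p\<bar>)"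
  unfolding l1norm_def by (rule sum.mono_neutral_left) auto

lemma l1norm_add: assumes "finite {p. c p \<noteq> 0}" "finite {p. d p \<noteq> 0}"
  shows "l1norm (c + d) \<le> l1norm c + l1norm d"
proof -
  let ?T = "{p. c p \<noteq> 0} \<union> {p. d p \<noteq> 0}"
  have f: "finite ?T" using assms by auto
  have "l1norm (c + d) = (\<Sum>p\<in>?T. nat \<bar>(c + d) p\<bar>)" by (rule supp_fin_sum[OF f]) auto
  also have "\<dots> \<le> (\<Sum>p\<in>?T. nat \<bar>c p\<bar> + nat \<bar>d p\<bar>)" by (rule sum_mono) auto
  also have "\<dots> = l1norm c + l1norm d" using supp_fin_sum[OF f, of c] supp_fin_sum[OF f, of d]
    by (simp add: sum.distrib)
  finally show ?thesis .
qed

lemma l1norm_neg: "l1norm (- c) = l1norm c" unfolding l1norm_def by simp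

lemma l1norm_zero: "finite {p. c p \<noteq> 0} \<Longrightarrow> l1norm c = 0 \<Longrightarrow> c = 0"
  unfolding l1norm_def by (rule ext) auto

lemma freeZG_add: "c \<in> freeZG G B \<Longrightarrow> d \<in> freeZG G B \<Longrightarrow> c + d \<in> freeZG G B"
proof -
  assume a: "c \<in> freeZG G B" "d \<in> freeZG G B"
  have "{p. (c + d) p \<noteq> 0} \<subseteq> {p. c p \<noteq> 0} \<union> {p. d p \<noteq> 0}" by auto
  thus ?thesis using a unfolding freeZG_def by (auto intro: finite_subset)
qed
lemma freeZG_neg: "c \<in> freeZG G B \<Longrightarrow> - c \<in> freeZG G B" unfolding freeZG_def by auto
lemma freeZG_zero: "0 \<in> freeZG G B" unfolding freeZG_def by auto
lemma freeZG_diff: "c \<in> freeZG G B \<Longrightarrow> d \<in> freeZG G B \<Longrightarrow> c - d \<in> freeZG G B"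
  using freeZG_add freeZG_neg by (metis diff_conv_add_uminus)

context group begin

lemma freeZG_act_supp: assumes "h \<in> carrier G" "c \<in> freeZG G B"
  shows "{p. freeZG_act G h c p \<noteq> 0} = (\<lambda>(g, b). (h \<otimes> g, b)) ` {p. c p \<noteq> 0}"
proof (rule Set.set_eqI, rule iffI)
  fix p assume "p \<in> {p. freeZG_act G h c p \<noteq> 0}"
  then obtain g b where p: "p = (g, b)" "g \<in> carrier G" "c (inv h \<otimes> g, b) \<noteq> 0"
    unfolding freeZG_act_def by (cases p) (auto split: if_splits)
  have "g = h \<otimes> (inv h \<otimes> g)" using assms p by (simp add: m_assoc[symmetric])
  thus "p \<in> (\<lambda>(g, b). (h \<otimes> g, b)) ` {p. c p \<noteq> 0}" using p by (auto intro!: image_eqI[where x="(inv h \<otimes> g, b)"])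
next
  fix p assume "p \<in> (\<lambda>(g, b). (h \<otimes> g, b)) ` {p. c p \<noteq> 0}"
  then obtain g b where p: "p = (h \<otimes> g, b)" "c (g, b) \<noteq> 0" by auto
  hence g: "g \<in> carrier G" using assms unfolding freeZG_def by auto
  have "inv h \<otimes> (h \<otimes> g) = g" using assms g by (simp add: m_assoc[symmetric])
  thus "p \<in> {p. freeZG_act G h c p \<noteq> 0}" using p g assms unfolding freeZG_act_def by auto
qed

lemma freeZG_act_closed: assumes "h \<in> carrier G" "c \<in> freeZG G B" shows "freeZG_act G h c \<in> freeZG G B"
proof -
  have "(\<lambda>(g, b). (h \<otimes> g, b)) ` {p. c p \<noteq> 0} \<subseteq> carrier G \<times> B" using assms unfolding freeZG_def by auto
  thus ?thesis using assms freeZG_act_supp[OF assms] unfolding freeZG_def by auto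
qed

lemma l1norm_act: assumes "h \<in> carrier G" "c \<in> freeZG G B" shows "l1norm (freeZG_act G h c) = l1norm c"
proof -
  have inj: "inj_on (\<lambda>(g, b). (h \<otimes> g, b)) {p. c p \<noteq> 0}"
  proof (rule inj_onI)
    fix p q assume pq: "p \<in> {p. c p \<noteq> 0}" "q \<in> {p. c p \<noteq> 0}" "(\<lambda>(g, b). (h \<otimes> g, b)) p = (\<lambda>(g, b). (h \<otimes> g, b)) q"
    obtain g1 b1 g2 b2 where "p = (g1, b1)" "q = (g2, b2)" by (cases p, cases q) auto
    moreover have "g1 \<in> carrier G" "g2 \<in> carrier G" using pq assms calculation unfolding freeZG_def by auto
    ultimately show "p = q" using pq assms by auto
  qed
  have "l1norm (freeZG_act G h c) = (\<Sum>p\<in>(\<lambda>(g, b). (h \<otimes> g, b)) ` {p. c p \<noteq> 0}. nat \<bar>freeZG_act G h c p\<bar>)"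
    unfolding l1norm_def freeZG_act_supp[OF assms] ..
  also have "\<dots> = (\<Sum>p\<in>{p. c p \<noteq> 0}. nat \<bar>freeZG_act G h c ((\<lambda>(g, b). (h \<otimes> g, b)) p)\<bar>)"
    using sum.reindex[OF inj] by (simp add: comp_def)
  also have "\<dots> = (\<Sum>p\<in>{p. c p \<noteq> 0}. nat \<bar>c p\<bar>)"
  proof (rule sum.cong)
    fix p assume "p \<in> {p. c p \<noteq> 0}"
    then obtain g b where p: "p = (g, b)" "g \<in> carrier G" using assms unfolding freeZG_def by auto
    have "inv h \<otimes> (h \<otimes> g) = g" using assms p by (simp add: m_assoc[symmetric])
    thus "nat \<bar>freeZG_act G h c ((\<lambda>(g, b). (h \<otimes> g, b)) p)\<bar> = nat \<bar>c p\<bar>"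
      using p assms unfolding freeZG_act_def by auto
  qed simp
  finally show ?thesis unfolding l1norm_def .
qed

end

section \<open>Filling norms\<close>

locale fillm = group G for G :: "('a, 'z) monoid_scheme" (structure) +
  fixes B :: "'b set" and A :: "'m::ab_group_add set" and \<alpha> and \<eta> :: "('a \<times> 'b \<Rightarrow> int) \<Rightarrow> 'm"
  assumes fm: "filling_map G B A \<alpha> \<eta>"
begin

lemma fin: "finite B" and eta_add: "c \<in> freeZG G B \<Longrightarrow> c' \<in> freeZG G B \<Longrightarrow> \<eta> (c + c') = \<eta> c + \<eta> c'"
  and eta_act: "h \<in> carrier G \<Longrightarrow> c \<in> freeZG G B \<Longrightarrow> \<eta> (freeZG_act G h c) = \<alpha> h (\<eta> c)"
  and Aimg: "\<eta> ` freeZG G B = A"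
  using fm unfolding filling_map_def by auto

lemma eta_0: "\<eta> 0 = 0"
  using eta_add[OF freeZG_zero freeZG_zero] by simp

lemma eta_neg: "c \<in> freeZG G B \<Longrightarrow> \<eta> (- c) = - \<eta> c"
proof -
  assume c: "c \<in> freeZG G B"
  have "\<eta> (c + - c) = \<eta> c + \<eta> (- c)" by (rule eta_add) (use c freeZG_neg in auto)
  thus ?thesis using eta_0 by (simp add: eq_neg_iff_add_eq_0 add.commute)
qed

lemma fn_ex: assumes "m \<in> A" shows "\<exists>c\<in>freeZG G B. \<eta> c = m \<and> l1norm c = fill_norm G B \<eta> m"
proof -
  obtain c where c: "c \<in> freeZG G B" "\<eta> c = m" using assms Aimg by auto
  show ?thesis unfolding fill_norm_def by (rule LeastI_ex) (use c in auto)
qed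

lemma fn_le: "c \<in> freeZG G B \<Longrightarrow> \<eta> c = m \<Longrightarrow> fill_norm G B \<eta> m \<le> l1norm c"
  unfolding fill_norm_def by (rule Least_le) auto

lemma inA: "c \<in> freeZG G B \<Longrightarrow> \<eta> c \<in> A" using Aimg by auto

lemma A_add: assumes "x \<in> A" "y \<in> A"
  shows "x + y \<in> A" "fill_norm G B \<eta> (x + y) \<le> fill_norm G B \<eta> x + fill_norm G B \<eta> y"
proof -
  obtain c where c: "c\<in>freeZG G B" "\<eta> c = x" "l1norm c = fill_norm G B \<eta> x" using fn_ex assms by blast
  obtain d where d: "d\<in>freeZG G B" "\<eta> d = y" "l1norm d = fill_norm G B \<eta> y" using fn_ex assms by blast
  have e: "\<eta> (c + d) = x + y" using c d eta_add by auto
  show "x + y \<in> A" using e inA freeZG_add c d by metis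
  have "fill_norm G B \<eta> (x + y) \<le> l1norm (c + d)" using fn_le e freeZG_add c d by blast
  also have "\<dots> \<le> l1norm c + l1norm d" using c d by (intro l1norm_add) (auto simp: freeZG_def)
  finally show "fill_norm G B \<eta> (x + y) \<le> fill_norm G B \<eta> x + fill_norm G B \<eta> y" using c d by simp
qed

lemma A_neg: assumes "x \<in> A" shows "- x \<in> A" "fill_norm G B \<eta> (- x) \<le> fill_norm G B \<eta> x"
proof -
  obtain c where c: "c\<in>freeZG G B" "\<eta> c = x" "l1norm c = fill_norm G B \<eta> x" using fn_ex assms by blast
  have e: "\<eta> (- c) = - x" using c eta_neg by auto
  show "- x \<in> A" using e inA freeZG_neg c by metis
  have "fill_norm G B \<eta> (- x) \<le> l1norm (- c)" using fn_le[OF freeZG_neg[OF c(1)] e] .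
  thus "fill_norm G B \<eta> (- x) \<le> fill_norm G B \<eta> x" using c(3) l1norm_neg[of c] by simp
qed

lemma A_act: assumes "x \<in> A" "h \<in> carrier G" shows "\<alpha> h x \<in> A" "fill_norm G B \<eta> (\<alpha> h x) \<le> fill_norm G B \<eta> x"
proof -
  obtain c where c: "c\<in>freeZG G B" "\<eta> c = x" "l1norm c = fill_norm G B \<eta> x" using fn_ex assms by blast
  have e: "\<eta> (freeZG_act G h c) = \<alpha> h x" using c eta_act assms by auto
  show "\<alpha> h x \<in> A" using e inA freeZG_act_closed c assms by metis
  have "fill_norm G B \<eta> (\<alpha> h x) \<le> l1norm (freeZG_act G h c)"
    using fn_le[OF freeZG_act_closed[OF assms(2) c(1)] e] .
  thus "fill_norm G B \<eta> (\<alpha> h x) \<le> fill_norm G B \<eta> x"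
    using c(3) l1norm_act[OF assms(2) c(1)] by simp
qed

lemma A_zero: "0 \<in> A" "fill_norm G B \<eta> 0 = 0"
proof -
  show "0 \<in> A" using inA[OF freeZG_zero] eta_0 by simp
  show "fill_norm G B \<eta> 0 = 0" using fn_le[OF freeZG_zero eta_0] by (simp add: l1norm_def)
qed

lemma A_closed: "addclosed A" unfolding addclosed_def using A_zero A_add A_neg by blast

end



lemma LIP:
  fixes B :: "'b set" and C :: "'c set"
  assumes g: "group G"
  and f1: "filling_map G B A1 \<alpha>1 \<eta>" and f2: "filling_map G C A2 \<alpha>2 \<theta>"
  and ph: "addhom A1 \<phi>" and ps: "addhom A2 \<psi>"
  and eq1: "\<forall>h\<in>carrier G. \<forall>x\<in>A1. \<phi> (\<alpha>1 h x) = \<alpha>3 h (\<phi> x)"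
  and eq2: "\<forall>h\<in>carrier G. \<forall>y\<in>A2. \<psi> (\<alpha>2 h y) = \<alpha>3 h (\<psi> y)"
  and im: "\<phi> ` A1 \<subseteq> \<psi> ` A2"
  shows "\<exists>K. \<forall>x\<in>A1. \<exists>y\<in>A2. \<psi> y = \<phi> x \<and> fill_norm G C \<theta> y \<le> K * fill_norm G B \<eta> x"
proof -
  interpret F1: fillm G B A1 \<alpha>1 \<eta> by (rule fillm.intro[OF g]) (unfold fillm_axioms_def, fact f1)
  interpret F2: fillm G C A2 \<alpha>2 \<theta> by (rule fillm.intro[OF g]) (unfold fillm_axioms_def, fact f2)
  define e where "e b = (\<lambda>q. if q = (\<one>\<^bsub>G\<^esub>, b) then (1::int) else 0)" for b :: 'b
  have e_in: "e b \<in> freeZG G B" if "b \<in> B" for b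
  proof -
    have "{p. e b p \<noteq> 0} = {(\<one>\<^bsub>G\<^esub>, b)}" unfolding e_def by auto
    thus ?thesis using that unfolding freeZG_def by auto
  qed
  define y where "y b = (SOME y. y \<in> A2 \<and> \<psi> y = \<phi> (\<eta> (e b)))" for b :: 'b
  have y: "y b \<in> A2 \<and> \<psi> (y b) = \<phi> (\<eta> (e b))" if "b \<in> B" for b
  proof -
    have "\<phi> (\<eta> (e b)) \<in> \<psi> ` A2" using im F1.inA[OF e_in[OF that]] by auto
    then obtain y0 where "y0 \<in> A2" "\<psi> y0 = \<phi> (\<eta> (e b))" by auto
    thus ?thesis unfolding y_def by (metis (mono_tags, lifting) someI_ex)
  qed
  define K where "K = (\<Sum>b\<in>B. fill_norm G C \<theta> (y b))"
  have Kb: "fill_norm G C \<theta> (y b) \<le> K" if "b \<in> B" for b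
    unfolding K_def by (rule member_le_sum) (use that F1.fin in auto)
  have A1c: "addclosed A1" by (rule F1.A_closed)
  have A2c: "addclosed A2" by (rule F2.A_closed)
  have main: "\<forall>c\<in>freeZG G B. l1norm c = n \<longrightarrow> (\<exists>z\<in>A2. \<psi> z = \<phi> (\<eta> c) \<and> fill_norm G C \<theta> z \<le> K * n)" for n
  proof (induction n)
    case 0
    show ?case
    proof (intro ballI impI)
      fix c assume c: "c \<in> freeZG G B" "l1norm c = 0"
      hence "c = 0" using l1norm_zero unfolding freeZG_def by blast
      hence "\<phi> (\<eta> c) = 0" using F1.eta_0 addhom_0[OF A1c ph] by simp
      moreover have "\<psi> 0 = 0" using addhom_0[OF A2c ps] .
      ultimately show "\<exists>z\<in>A2. \<psi> z = \<phi> (\<eta> c) \<and> fill_norm G C \<theta> z \<le> K * 0"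
        using F2.A_zero by (intro bexI[where x=0]) auto
    qed
  next
    case (Suc n)
    show ?case
    proof (intro ballI impI)
      fix c assume c: "c \<in> freeZG G B" "l1norm c = Suc n"
      have fs: "finite {p. c p \<noteq> 0}" using c unfolding freeZG_def by auto
      have "{p. c p \<noteq> 0} \<noteq> {}"
      proof
        assume "{p. c p \<noteq> 0} = {}"
        hence "l1norm c = 0" unfolding l1norm_def by (simp only: sum.empty)
        thus False using c by simp
      qed
      then obtain pp where "c pp \<noteq> 0" by auto
      then obtain g b where p: "c (g, b) \<noteq> 0" by (cases pp) auto
      hence gb: "g \<in> carrier G" "b \<in> B" using c unfolding freeZG_def by auto
      define \<sigma> where "\<sigma> = sgn (c (g, b))"
      have \<sigma>: "\<sigma> = 1 \<or> \<sigma> = -1" using p unfolding \<sigma>_def by (auto simp: sgn_if)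
      define \<delta> where "\<delta> = (\<lambda>q. if q = (g, b) then \<sigma> else 0)"
      have \<delta>in: "\<delta> \<in> freeZG G B"
      proof -
        have "{p. \<delta> p \<noteq> 0} \<subseteq> {(g, b)}" unfolding \<delta>_def by auto
        thus ?thesis using gb unfolding freeZG_def by (auto intro: finite_subset)
      qed
      define c' where "c' = c - \<delta>"
      have c'in: "c' \<in> freeZG G B" unfolding c'_def using freeZG_diff c(1) \<delta>in by blast
      have c'n: "l1norm c' = n"
      proof -
        let ?T = "{p. c p \<noteq> 0}"
        have pT: "(g, b) \<in> ?T" using p by auto
        have "{p. c' p \<noteq> 0} \<subseteq> ?T" unfolding c'_def \<delta>_def using p by auto
        hence "l1norm c' = (\<Sum>q\<in>?T. nat \<bar>c' q\<bar>)" using supp_fin_sum fs by blast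
        also have "\<dots> = nat \<bar>c' (g, b)\<bar> + (\<Sum>q\<in>?T - {(g, b)}. nat \<bar>c' q\<bar>)"
          using sum.remove[OF fs pT] by simp
        also have "(\<Sum>q\<in>?T - {(g, b)}. nat \<bar>c' q\<bar>) = (\<Sum>q\<in>?T - {(g, b)}. nat \<bar>c q\<bar>)"
          unfolding c'_def \<delta>_def by (rule sum.cong) auto
        also have "nat \<bar>c' (g, b)\<bar> + 1 = nat \<bar>c (g, b)\<bar>"
          unfolding c'_def \<delta>_def \<sigma>_def using p by (auto simp: sgn_if)
        moreover have "l1norm c = nat \<bar>c (g, b)\<bar> + (\<Sum>q\<in>?T - {(g, b)}. nat \<bar>c q\<bar>)"
          unfolding l1norm_def using sum.remove[OF fs pT] by simp
        ultimately show ?thesis using c(2) by linarith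
      qed
      obtain z' where z': "z' \<in> A2" "\<psi> z' = \<phi> (\<eta> c')" "fill_norm G C \<theta> z' \<le> K * n"
        using Suc.IH c'in c'n by blast
      define \<delta>1 where "\<delta>1 = (if \<sigma> = 1 then e b else - e b)"
      have \<delta>1in: "\<delta>1 \<in> freeZG G B" unfolding \<delta>1_def using e_in[OF gb(2)] freeZG_neg by auto
      have \<delta>act: "\<delta> = freeZG_act G g \<delta>1"
      proof (rule ext)
        fix q :: "'a \<times> 'b" obtain g' b' where q: "q = (g', b')" by (cases q) auto
        have "(inv\<^bsub>G\<^esub> g \<otimes>\<^bsub>G\<^esub> g' = \<one>\<^bsub>G\<^esub>) = (g' = g)" if "g' \<in> carrier G"
          using that gb g by (metis group.inv_closed group.inv_inv group.inv_equality group.r_inv)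
        thus "\<delta> q = freeZG_act G g \<delta>1 q"
          unfolding q \<delta>_def \<delta>1_def freeZG_act_def e_def using \<sigma> gb by auto
      qed
      define w where "w = (if \<sigma> = 1 then y b else - y b)"
      have w: "w \<in> A2" "\<psi> w = \<phi> (\<eta> \<delta>1)" "fill_norm G C \<theta> w \<le> K"
      proof -
        have yb: "y b \<in> A2" "\<psi> (y b) = \<phi> (\<eta> (e b))" using y gb by auto
        show "w \<in> A2" unfolding w_def using yb F2.A_neg by auto
        show "fill_norm G C \<theta> w \<le> K" unfolding w_def using yb F2.A_neg Kb[OF gb(2)]
          by (auto intro: order_trans)
        have "\<psi> (- y b) = \<phi> (\<eta> (- e b))"
          using addhom_neg[OF A2c ps yb(1)] addhom_neg[OF A1c ph F1.inA[OF e_in[OF gb(2)]]]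
            F1.eta_neg[OF e_in[OF gb(2)]] yb(2) by simp
        thus "\<psi> w = \<phi> (\<eta> \<delta>1)" unfolding w_def \<delta>1_def using yb by auto
      qed
      define z where "z = \<alpha>2 g w"
      have z: "z \<in> A2" "fill_norm G C \<theta> z \<le> K" using F2.A_act[OF w(1) gb(1)] w(3) unfolding z_def by auto
      have "\<psi> z = \<alpha>3 g (\<phi> (\<eta> \<delta>1))" unfolding z_def using eq2 gb w by auto
      also have "\<dots> = \<phi> (\<alpha>1 g (\<eta> \<delta>1))" using eq1 gb F1.inA[OF \<delta>1in] by auto
      also have "\<dots> = \<phi> (\<eta> \<delta>)" using F1.eta_act[OF gb(1) \<delta>1in] \<delta>act by simp
      finally have zpsi: "\<psi> z = \<phi> (\<eta> \<delta>)" .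
      have "c = c' + \<delta>" unfolding c'_def by simp
      hence "\<eta> c = \<eta> c' + \<eta> \<delta>" using F1.eta_add c'in \<delta>in by simp
      hence "\<phi> (\<eta> c) = \<phi> (\<eta> c') + \<phi> (\<eta> \<delta>)" using ph F1.inA c'in \<delta>in unfolding addhom_def by simp
      moreover have "\<psi> (z' + z) = \<psi> z' + \<psi> z" using ps z'(1) z(1) unfolding addhom_def by simp
      moreover have "fill_norm G C \<theta> (z' + z) \<le> K * Suc n"
        using F2.A_add(2)[OF z'(1) z(1)] z'(3) z(2) by simp
      ultimately show "\<exists>z\<in>A2. \<psi> z = \<phi> (\<eta> c) \<and> fill_norm G C \<theta> z \<le> K * Suc n"
        using z'(1,2) z(1) zpsi F2.A_add(1)[OF z'(1) z(1)] by (intro bexI[where x="z' + z"]) auto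
    qed
  qed
  show ?thesis
  proof (intro exI ballI)
    fix x assume "x \<in> A1"
    then obtain c where c: "c \<in> freeZG G B" "\<eta> c = x" "l1norm c = fill_norm G B \<eta> x" using F1.fn_ex by blast
    thus "\<exists>y\<in>A2. \<psi> y = \<phi> x \<and> fill_norm G C \<theta> y \<le> K * fill_norm G B \<eta> x" using main by blast
  qed
qed



lemma sum_fun_apply: "(\<Sum>s\<in>T. f s) t = (\<Sum>s\<in>T. f s t)"
  by (induction T rule: infinite_finite_induct) auto

lemma zsc_sum: "zsc (sum f T) x = (\<Sum>s\<in>T. zsc (f s) x)"
  by (induction T rule: infinite_finite_induct) (auto simp: zsc_add)

context group begin

lemma lcos_mult_coset:
  assumes "x \<in> carrier G" "g \<in> carrier G" "subgroup K G" "subgroup L G"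
    and conj: "\<forall>k\<in>K. inv g \<otimes> k \<otimes> g \<in> L"
  shows "(x <# K) <#> (g <# L) = (x \<otimes> g) <# L"
proof (rule Set.set_eqI, rule iffI)
  fix z assume "z \<in> (x <# K) <#> (g <# L)"
  then obtain k l where kl: "k \<in> K" "l \<in> L" "z = (x \<otimes> k) \<otimes> (g \<otimes> l)"
    unfolding set_mult_def l_coset_def by auto
  have c: "k \<in> carrier G" "l \<in> carrier G" using kl assms subgroup.mem_carrier by metis+
  have "z = (x \<otimes> g) \<otimes> ((inv g \<otimes> k \<otimes> g) \<otimes> l)" using kl c assms
    by (simp add: m_assoc[symmetric]) (simp add: m_assoc)
  moreover have "(inv g \<otimes> k \<otimes> g) \<otimes> l \<in> L" using conj kl assms(4) subgroup.m_closed by metis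
  ultimately show "z \<in> (x \<otimes> g) <# L" unfolding l_coset_def by auto
next
  fix z assume "z \<in> (x \<otimes> g) <# L"
  then obtain l where l: "l \<in> L" "z = (x \<otimes> g) \<otimes> l" unfolding l_coset_def by auto
  have "l \<in> carrier G" using l assms subgroup.mem_carrier by metis
  hence "z = (x \<otimes> \<one>) \<otimes> (g \<otimes> l)" using l assms by (simp add: m_assoc)
  moreover have "\<one> \<in> K" using assms(3) subgroup.one_closed by metis
  ultimately show "z \<in> (x <# K) <#> (g <# L)" using l unfolding set_mult_def l_coset_def by blast
qed

lemma lcos_eq_iff:
  assumes "a \<in> carrier G" "b \<in> carrier G" "subgroup L G"
  shows "(a <# L = b <# L) \<longleftrightarrow> inv a \<otimes> b \<in> L"
proof
  assume e: "a <# L = b <# L"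
  have "b \<otimes> \<one> \<in> b <# L" using assms subgroup.one_closed unfolding l_coset_def by blast
  hence "b \<in> a <# L" using e assms by simp
  then obtain l where "l \<in> L" "b = a \<otimes> l" unfolding l_coset_def by auto
  moreover have "l \<in> carrier G" using calculation assms subgroup.mem_carrier by metis
  ultimately show "inv a \<otimes> b \<in> L" using assms by (simp add: m_assoc[symmetric])
next
  assume i: "inv a \<otimes> b \<in> L"
  have "b = a \<otimes> (inv a \<otimes> b)" using assms by (simp add: m_assoc[symmetric])
  hence "b \<in> a <# L" using i unfolding l_coset_def by auto
  thus "a <# L = b <# L" using l_repr_independence assms by blast
qed

lemma self_lcos: "subgroup K G \<Longrightarrow> K \<in> lcos G K"
  unfolding lcos_def using lcos_mult_one[of K] subgroup.subset by (metis image_eqI one_closed)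

lemma Gmap_val:
  assumes "Gmap G K L \<phi>" "subgroup K G" "subgroup L G"
  shows "\<exists>a\<in>carrier G. \<phi> K = a <# L \<and> (\<forall>x\<in>carrier G. \<phi> (x <# K) = (x \<otimes> a) <# L)"
proof -
  have "\<phi> K \<in> lcos G L" using assms self_lcos unfolding Gmap_def by auto
  then obtain a where a: "a \<in> carrier G" "\<phi> K = a <# L" unfolding lcos_def by auto
  have "\<phi> (x <# K) = (x \<otimes> a) <# L" if "x \<in> carrier G" for x
  proof -
    have "\<phi> (x <# K) = x <# \<phi> K" using assms self_lcos that unfolding Gmap_def by auto
    also have "\<dots> = (x \<otimes> a) <# L" using a that lcos_m_assoc[of L x a] subgroup.subset[OF assms(3)] by simp
    finally show ?thesis .
  qed
  thus ?thesis using a by blast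
qed

end



locale gctx = group G for G :: "('a, 'z) monoid_scheme" (structure) +
  fixes F :: "'a set set" and act :: "'a \<Rightarrow> 's \<Rightarrow> 's" and S :: "'s set"
  assumes fam: "family G F" and gset: "Gset G act S" and iso: "isotropy_in G F act S"
begin

lemma act_closed: "g \<in> carrier G \<Longrightarrow> s \<in> S \<Longrightarrow> act g s \<in> S"
  and act_one: "s \<in> S \<Longrightarrow> act \<one> s = s"
  and act_mult: "g \<in> carrier G \<Longrightarrow> h \<in> carrier G \<Longrightarrow> s \<in> S \<Longrightarrow> act (g \<otimes> h) s = act g (act h s)"
  using gset unfolding Gset_def by auto

lemma act_inv: "g \<in> carrier G \<Longrightarrow> s \<in> S \<Longrightarrow> act (inv g) (act g s) = s"
  using act_mult[of "inv g" g s] act_one by simp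

lemma F_sub: "K \<in> F \<Longrightarrow> subgroup K G" using fam unfolding family_def by auto

definition orb where "orb s = {act g s | g. g \<in> carrier G}"
definition rep where "rep s = (SOME t. t \<in> orb s)"
definition gs where "gs s = (SOME g. g \<in> carrier G \<and> act g (rep s) = s)"
definition stab where "stab t = {g\<in>carrier G. act g t = t}"

lemma rep: assumes "s \<in> S" shows "rep s \<in> S" "gs s \<in> carrier G" "act (gs s) (rep s) = s"
proof -
  have "s = act \<one> s" using act_one assms by simp
  hence "s \<in> orb s" unfolding orb_def by blast
  hence "rep s \<in> orb s" unfolding rep_def by (rule someI)
  then obtain g where g: "g \<in> carrier G" "rep s = act g s" unfolding orb_def by auto
  show "rep s \<in> S" using g act_closed assms by simp
  have "\<exists>h. h \<in> carrier G \<and> act h (rep s) = s" using g act_inv assms by (intro exI[of _ "inv g"]) auto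
  hence "gs s \<in> carrier G \<and> act (gs s) (rep s) = s" unfolding gs_def by (rule someI_ex)
  thus "gs s \<in> carrier G" "act (gs s) (rep s) = s" by auto
qed

lemma rep_act: assumes "h \<in> carrier G" "s \<in> S" shows "rep (act h s) = rep s"
proof -
  have "orb (act h s) = orb s"
  proof (rule Set.set_eqI, rule iffI)
    fix t assume "t \<in> orb (act h s)"
    then obtain g where "g \<in> carrier G" "t = act g (act h s)" unfolding orb_def by auto
    hence "t = act (g \<otimes> h) s \<and> g \<otimes> h \<in> carrier G" using act_mult assms by simp
    thus "t \<in> orb s" unfolding orb_def by blast
  next
    fix t assume "t \<in> orb s"
    then obtain g where g: "g \<in> carrier G" "t = act g s" unfolding orb_def by auto
    hence "t = act (g \<otimes> inv h) (act h s)" using act_mult assms act_inv by (simp add: act_closed)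
    thus "t \<in> orb (act h s)" unfolding orb_def using g assms by blast
  qed
  thus ?thesis unfolding rep_def by simp
qed

lemma stab_F: "t \<in> S \<Longrightarrow> stab t \<in> F" using iso unfolding isotropy_in_def stab_def by auto

lemma stab_sub: "t \<in> S \<Longrightarrow> subgroup (stab t) G" using stab_F F_sub by blast

definition chi where "chi s K = restrict (\<lambda>C. C <#> (gs s <# stab (rep s))) (lcos G K)"

lemma conj_stab: assumes "s \<in> fixpts G act S K" "K \<subseteq> carrier G"
  shows "\<forall>k\<in>K. inv (gs s) \<otimes> k \<otimes> gs s \<in> stab (rep s)"
proof
  fix k assume k: "k \<in> K"
  have s: "s \<in> S" "act k s = s" using assms k unfolding fixpts_def by auto
  have kc: "k \<in> carrier G" using k assms by auto
  note r = rep[OF s(1)]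
  have "act (inv (gs s) \<otimes> k \<otimes> gs s) (rep s) = act (inv (gs s)) (act k (act (gs s) (rep s)))"
    using r kc act_mult s(1) by (simp add: act_closed)
  also have "\<dots> = rep s" using act_inv[OF r(2) r(1)] r(3) s by simp
  finally show "inv (gs s) \<otimes> k \<otimes> gs s \<in> stab (rep s)" unfolding stab_def using r kc by simp
qed

lemma chi_val: assumes "K \<in> F" "s \<in> fixpts G act S K" "x \<in> carrier G"
  shows "chi s K (x <# K) = (x \<otimes> gs s) <# stab (rep s)"
proof -
  have K: "subgroup K G" using F_sub assms by blast
  have s: "s \<in> S" using assms unfolding fixpts_def by auto
  have "x <# K \<in> lcos G K" unfolding lcos_def using assms by auto
  thus ?thesis unfolding chi_def using lcos_mult_coset[OF assms(3) rep(2)[OF s] K stab_sub[OF rep(1)[OF s]]]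
    conj_stab[OF assms(2) subgroup.subset[OF K]] by simp
qed

lemma chi_Gmap: assumes "K \<in> F" "s \<in> fixpts G act S K"
  shows "Gmap G K (stab (rep s)) (chi s K)"
proof -
  have K: "subgroup K G" using F_sub assms by blast
  have s: "s \<in> S" using assms unfolding fixpts_def by auto
  note r = rep[OF s]
  have "chi s K \<in> lcos G K \<rightarrow>\<^sub>E lcos G (stab (rep s))"
  proof
    fix C assume "C \<in> lcos G K"
    then obtain x where x: "x \<in> carrier G" "C = x <# K" unfolding lcos_def by auto
    thus "chi s K C \<in> lcos G (stab (rep s))" using chi_val[OF assms x(1)] r unfolding lcos_def by auto
  next
    fix C assume "C \<notin> lcos G K" thus "chi s K C = undefined" unfolding chi_def by simp
  qed
  moreover have "chi s K (g <# C) = g <# chi s K C" if gC: "g \<in> carrier G" "C \<in> lcos G K" for g C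
  proof -
    obtain x where x: "x \<in> carrier G" "C = x <# K" using gC unfolding lcos_def by auto
    have "g <# C = (g \<otimes> x) <# K" using x gC lcos_m_assoc subgroup.subset[OF K] by simp
    hence "chi s K (g <# C) = (g \<otimes> x \<otimes> gs s) <# stab (rep s)" using chi_val[OF assms] x gC by simp
    also have "\<dots> = g <# ((x \<otimes> gs s) <# stab (rep s))"
      using lcos_m_assoc subgroup.subset[OF stab_sub[OF r(1)]] x gC r by (simp add: m_assoc)
    finally show ?thesis using chi_val[OF assms x(1)] x by simp
  qed
  ultimately show ?thesis unfolding Gmap_def by auto
qed

end


context group begin
lemma inv_cancel3: "x \<in> carrier G \<Longrightarrow> y \<in> carrier G \<Longrightarrow> z \<in> carrier G \<Longrightarrow> inv (x \<otimes> y) \<otimes> (x \<otimes> z) = inv y \<otimes> z"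
  by (simp add: inv_mult_group m_assoc[symmetric]) (simp add: m_assoc)

lemma Gmap_val2:
  assumes "Gmap G K L \<phi>" "subgroup K G" "subgroup L G" "a \<in> carrier G" "\<phi> K = a <# L" "x \<in> carrier G"
  shows "\<phi> (x <# K) = (x \<otimes> a) <# L"
proof -
  have "\<phi> (x <# K) = x <# \<phi> K" using assms self_lcos unfolding Gmap_def by auto
  thus ?thesis using assms lcos_m_assoc[of L x a] subgroup.subset[OF assms(3)] by simp
qed
end

lemma free_mod_simps[simp]: "oc (free_mod G act S) = free_oc G act S" "om (free_mod G act S) = free_om G act"
  by (simp_all add: free_mod_def)

lemma free_oc_closed: "addclosed (free_oc G act S K)"
proof -
  have add: "c + d \<in> free_oc G act S K" if "c \<in> free_oc G act S K" "d \<in> free_oc G act S K" for c d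
  proof -
    have sub: "{s. (c + d) s \<noteq> 0} \<subseteq> {s. c s \<noteq> 0} \<union> {s. d s \<noteq> 0}" by auto
    show ?thesis using that finite_subset[OF sub] sub unfolding free_oc_def by auto
  qed
  have "- c \<in> free_oc G act S K" if "c \<in> free_oc G act S K" for c
    using that unfolding free_oc_def by auto
  moreover have "0 \<in> free_oc G act S K" unfolding free_oc_def by auto
  ultimately show ?thesis using add unfolding addclosed_def by blast
qed

lemma omod_closed: "is_omod G F M \<Longrightarrow> K \<in> F \<Longrightarrow> addclosed (oc M K)"
  unfolding is_omod_def addclosed_def by auto
lemma omod_om: "is_omod G F M \<Longrightarrow> K \<in> F \<Longrightarrow> L \<in> F \<Longrightarrow> Gmap G K L \<phi> \<Longrightarrow>
   addhom (oc M L) (om M \<phi> K L) \<and> (\<forall>x\<in>oc M L. om M \<phi> K L x \<in> oc M K)"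
  unfolding is_omod_def addhom_def by auto
lemma omod_comp: "is_omod G F M \<Longrightarrow> K \<in> F \<Longrightarrow> L \<in> F \<Longrightarrow> J \<in> F \<Longrightarrow> Gmap G K L \<phi> \<Longrightarrow> Gmap G L J \<psi> \<Longrightarrow>
   x \<in> oc M J \<Longrightarrow> om M (restrict (\<psi> \<circ> \<phi>) (lcos G K)) K J x = om M \<phi> K L (om M \<psi> L J x)"
  unfolding is_omod_def by blast
lemma hom_in: "is_hom G F M N f \<Longrightarrow> K \<in> F \<Longrightarrow> x \<in> oc M K \<Longrightarrow> f K x \<in> oc N K"
  unfolding is_hom_def by blast
lemma hom_add: "is_hom G F M N f \<Longrightarrow> K \<in> F \<Longrightarrow> addhom (oc M K) (f K)"
  unfolding is_hom_def addhom_def by blast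
lemma hom_nat: "is_hom G F M N f \<Longrightarrow> K \<in> F \<Longrightarrow> L \<in> F \<Longrightarrow> Gmap G K L \<phi> \<Longrightarrow> x \<in> oc M L \<Longrightarrow>
   f K (om M \<phi> K L x) = om N \<phi> K L (f L x)"
  unfolding is_hom_def by blast

definition delta :: "'s \<Rightarrow> 's \<Rightarrow> int" where "delta t = (\<lambda>x. if x = t then 1 else 0)"

lemma delta_in: "t \<in> fixpts G act S K \<Longrightarrow> delta t \<in> free_oc G act S K"
proof -
  assume "t \<in> fixpts G act S K"
  moreover have "{s. delta t s \<noteq> 0} = {t}" unfolding delta_def by auto
  ultimately show ?thesis unfolding free_oc_def by auto
qed

locale freelift = gctx G F act S for G :: "('a, 'z) monoid_scheme" (structure) and F and act :: "'a \<Rightarrow> 's \<Rightarrow> 's" and S +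
  fixes Q :: "('a, 'q::ab_group_add) omod" and N :: "('a, 'n::ab_group_add) omod"
    and p :: "'a set \<Rightarrow> 'q \<Rightarrow> 'n" and U :: "'a set \<Rightarrow> ('s \<Rightarrow> int) \<Rightarrow> 'n"
  assumes Qm: "is_omod G F Q" and ph: "is_hom G F Q N p" and Uh: "is_hom G F (free_mod G act S) N U"
    and img: "\<forall>K\<in>F. U K ` free_oc G act S K \<subseteq> p K ` oc Q K"
begin

lemma act_inv': "g \<in> carrier G \<Longrightarrow> s \<in> S \<Longrightarrow> act g (act (inv g) s) = s"
  using act_inv[of "inv g" s] by simp

definition q where "q t = (SOME y. y \<in> oc Q (stab t) \<and> p (stab t) y = U (stab t) (delta t))"
definition E where "E K s = om Q (chi s K) K (stab (rep s)) (q (rep s))"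
definition Fr where "Fr K c = (\<Sum>s\<in>{s. c s \<noteq> 0}. zsc (c s) (E K s))"

lemma self_fix: "t \<in> S \<Longrightarrow> t \<in> fixpts G act S (stab t)"
  unfolding fixpts_def stab_def by auto

lemma q_prop: assumes "t \<in> S" shows "q t \<in> oc Q (stab t)" "p (stab t) (q t) = U (stab t) (delta t)"
proof -
  have "U (stab t) (delta t) \<in> p (stab t) ` oc Q (stab t)"
    using img stab_F[OF assms] delta_in[OF self_fix[OF assms]] by auto
  then obtain y where "y \<in> oc Q (stab t)" "p (stab t) y = U (stab t) (delta t)" by auto
  hence "q t \<in> oc Q (stab t) \<and> p (stab t) (q t) = U (stab t) (delta t)" unfolding q_def by (rule someI[where x=y, OF conjI])
  thus "q t \<in> oc Q (stab t)" "p (stab t) (q t) = U (stab t) (delta t)" by auto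
qed

lemma fixS: "s \<in> fixpts G act S K \<Longrightarrow> s \<in> S" unfolding fixpts_def by auto

lemma E_in: assumes "K \<in> F" "s \<in> fixpts G act S K" shows "E K s \<in> oc Q K"
proof -
  have s: "s \<in> S" using fixS assms by blast
  show ?thesis unfolding E_def
    using omod_om[OF Qm assms(1) stab_F[OF rep(1)[OF s]] chi_Gmap[OF assms]] q_prop(1)[OF rep(1)[OF s]] by blast
qed

lemma Fr_sup: assumes "finite T" "{s. c s \<noteq> 0} \<subseteq> T" shows "Fr K c = (\<Sum>s\<in>T. zsc (c s) (E K s))"
  unfolding Fr_def by (rule sum.mono_neutral_left) (use assms in auto)

lemma Fr_in: assumes "K \<in> F" "c \<in> free_oc G act S K" shows "Fr K c \<in> oc Q K"
  unfolding Fr_def using assms E_in zsc_closed[OF omod_closed[OF Qm assms(1)]]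
  by (intro sum_closed[OF omod_closed[OF Qm assms(1)]]) (auto simp: free_oc_def)

lemma Fr_add: assumes "c \<in> free_oc G act S K" "d \<in> free_oc G act S K"
  shows "Fr K (c + d) = Fr K c + Fr K d"
proof -
  let ?T = "{s. c s \<noteq> 0} \<union> {s. d s \<noteq> 0}"
  have f: "finite ?T" using assms unfolding free_oc_def by auto
  have "Fr K (c + d) = (\<Sum>s\<in>?T. zsc ((c + d) s) (E K s))" by (rule Fr_sup[OF f]) auto
  also have "\<dots> = (\<Sum>s\<in>?T. zsc (c s) (E K s)) + (\<Sum>s\<in>?T. zsc (d s) (E K s))"
    by (simp add: zsc_add sum.distrib)
  also have "\<dots> = Fr K c + Fr K d" using Fr_sup[OF f, of c] Fr_sup[OF f, of d] by auto
  finally show ?thesis .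
qed

lemma E_nat:
  assumes KL: "K \<in> F" "L \<in> F" and \<phi>: "Gmap G K L \<phi>" and a: "a \<in> carrier G"
    and \<phi>a: "\<And>x. x \<in> carrier G \<Longrightarrow> \<phi> (x <# K) = (x \<otimes> a) <# L"
    and s: "s \<in> fixpts G act S L"
  shows "E K (act a s) = om Q \<phi> K L (E L s)"
proof -
  have sS: "s \<in> S" using s fixS by blast
  note r = rep[OF sS]
  define R where "R = stab (rep s)"
  have RF: "R \<in> F" unfolding R_def using stab_F r by blast
  have Ksub: "subgroup K G" "subgroup L G" using F_sub KL by auto
  have asS: "act a s \<in> S" using act_closed a sS by blast
  have ras: "rep (act a s) = rep s" using rep_act a sS by blast
  note r2 = rep[OF asS]
  have asfix: "act a s \<in> fixpts G act S K"
    unfolding fixpts_def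
  proof (intro CollectI conjI ballI asS)
    fix k assume k: "k \<in> K"
    have kc: "k \<in> carrier G" "inv k \<in> K" "inv k \<in> carrier G" using k Ksub subgroup.mem_carrier subgroup.m_inv_closed by metis+
    have "inv k <# K = \<one> <# K" using lcos_eq_iff[OF kc(3) one_closed Ksub(1)] kc k by simp
    also have "\<dots> = K" using lcos_mult_one subgroup.subset[OF Ksub(1)] by simp
    finally have "\<phi> (inv k <# K) = \<phi> (\<one> <# K)" using lcos_mult_one subgroup.subset[OF Ksub(1)] by simp
    hence "(inv k \<otimes> a) <# L = (\<one> \<otimes> a) <# L" using \<phi>a kc by simp
    hence "inv (inv k \<otimes> a) \<otimes> a \<in> L" using lcos_eq_iff kc a Ksub by simp
    hence m: "inv a \<otimes> k \<otimes> a \<in> L" using kc a by (simp add: inv_mult_group)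
    hence "act (inv a \<otimes> k \<otimes> a) s = s" using s unfolding fixpts_def by auto
    hence "act a (act (inv a \<otimes> k \<otimes> a) s) = act a s" by simp
    thus "act k (act a s) = act a s" using act_mult kc a sS by (simp add: m_assoc[symmetric] act_closed act_inv')
  qed
  have eqmap: "chi (act a s) K = restrict (chi s L \<circ> \<phi>) (lcos G K)"
  proof (rule ext)
    fix C show "chi (act a s) K C = restrict (chi s L \<circ> \<phi>) (lcos G K) C"
    proof (cases "C \<in> lcos G K")
      case False thus ?thesis unfolding chi_def by simp
    next
      case True
      then obtain x where x: "x \<in> carrier G" "C = x <# K" unfolding lcos_def by auto
      have "chi (act a s) K C = (x \<otimes> gs (act a s)) <# R"
        using chi_val[OF KL(1) asfix x(1)] x ras unfolding R_def by simp
      moreover have "restrict (chi s L \<circ> \<phi>) (lcos G K) C = (x \<otimes> a \<otimes> gs s) <# R"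
        using True x \<phi>a chi_val[OF KL(2) s] a unfolding R_def by simp
      moreover have "(x \<otimes> gs (act a s)) <# R = (x \<otimes> a \<otimes> gs s) <# R"
      proof -
        have "inv (x \<otimes> gs (act a s)) \<otimes> (x \<otimes> a \<otimes> gs s) = inv (gs (act a s)) \<otimes> (a \<otimes> gs s)"
          using inv_cancel3 x r2 r a by (simp add: m_assoc)
        moreover have "act (inv (gs (act a s)) \<otimes> (a \<otimes> gs s)) (rep s) = rep s"
        proof -
          have "act (inv (gs (act a s)) \<otimes> (a \<otimes> gs s)) (rep s) = act (inv (gs (act a s))) (act a (act (gs s) (rep s)))"
            using act_mult r r2 a by (simp add: act_closed)
          also have "\<dots> = act (inv (gs (act a s))) (act (gs (act a s)) (rep (act a s)))" using r r2 by simp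
          also have "\<dots> = rep s" using act_inv[OF r2(2) r2(1)] ras by simp
          finally show ?thesis .
        qed
        ultimately have "inv (x \<otimes> gs (act a s)) \<otimes> (x \<otimes> a \<otimes> gs s) \<in> R"
          unfolding R_def stab_def using r r2 a by simp
        thus ?thesis using lcos_eq_iff x r r2 a stab_sub[OF r(1)] unfolding R_def by simp
      qed
      ultimately show ?thesis by simp
    qed
  qed
  have "om Q \<phi> K L (E L s) = om Q \<phi> K L (om Q (chi s L) L R (q (rep s)))" unfolding E_def R_def ..
  also have "\<dots> = om Q (restrict (chi s L \<circ> \<phi>) (lcos G K)) K R (q (rep s))"
    using omod_comp[OF Qm KL RF \<phi> chi_Gmap[OF KL(2) s, folded R_def]] q_prop(1)[OF r(1)] unfolding R_def by simp
  also have "\<dots> = E K (act a s)" unfolding E_def eqmap[symmetric] ras R_def ..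
  finally show ?thesis by simp
qed

end


context freelift begin

lemma Fr_nat:
  assumes KL: "K \<in> F" "L \<in> F" and \<phi>: "Gmap G K L \<phi>" and c: "c \<in> free_oc G act S L"
  shows "Fr K (free_om G act \<phi> K L c) = om Q \<phi> K L (Fr L c)"
proof -
  have Ksub: "subgroup K G" "subgroup L G" using F_sub KL by auto
  define a where "a = (SOME g. g \<in> carrier G \<and> \<phi> K = g <# L)"
  have "\<exists>g. g \<in> carrier G \<and> \<phi> K = g <# L" using Gmap_val[OF \<phi> Ksub] by blast
  hence "a \<in> carrier G \<and> \<phi> K = a <# L" unfolding a_def by (rule someI_ex)
  hence a: "a \<in> carrier G" "\<phi> K = a <# L" by auto
  have \<phi>a: "\<phi> (x <# K) = (x \<otimes> a) <# L" if "x \<in> carrier G" for x using Gmap_val2[OF \<phi> Ksub a that] .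
  define T where "T = {s. c s \<noteq> 0}"
  have fT: "finite T" and Tfix: "T \<subseteq> fixpts G act S L" using c unfolding T_def free_oc_def by auto
  define c2 where "c2 = (\<lambda>t. \<Sum>s\<in>{s\<in>T. act a s = t}. c s)"
  have c2eq: "free_om G act \<phi> K L c = c2"
    unfolding free_om_def Let_def a_def[symmetric] c2_def T_def by simp
  have supp2: "{t. c2 t \<noteq> 0} \<subseteq> act a ` T"
  proof
    fix t assume "t \<in> {t. c2 t \<noteq> 0}"
    hence "{s\<in>T. act a s = t} \<noteq> {}" unfolding c2_def by (intro notI) (simp only: sum.empty mem_Collect_eq)
    thus "t \<in> act a ` T" by auto
  qed
  have "Fr K c2 = (\<Sum>t\<in>act a ` T. zsc (c2 t) (E K t))" by (rule Fr_sup) (use fT supp2 in auto)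
  also have "\<dots> = (\<Sum>t\<in>act a ` T. \<Sum>s\<in>{s\<in>T. act a s = t}. zsc (c s) (E K t))"
    unfolding c2_def zsc_sum ..
  also have "\<dots> = (\<Sum>t\<in>act a ` T. \<Sum>s\<in>{s\<in>T. act a s = t}. zsc (c s) (E K (act a s)))"
    by (intro sum.cong refl) auto
  also have "\<dots> = (\<Sum>s\<in>T. zsc (c s) (E K (act a s)))"
    by (rule sum.image_gen[symmetric, OF fT])
  also have "\<dots> = (\<Sum>s\<in>T. om Q \<phi> K L (zsc (c s) (E L s)))"
  proof (rule sum.cong[OF refl])
    fix s assume sT: "s \<in> T"
    hence sfix: "s \<in> fixpts G act S L" using Tfix by auto
    have "E K (act a s) = om Q \<phi> K L (E L s)" using E_nat[OF KL \<phi> a(1) \<phi>a sfix] by simp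
    thus "zsc (c s) (E K (act a s)) = om Q \<phi> K L (zsc (c s) (E L s))"
      using addhom_zsc[OF omod_closed[OF Qm KL(2)] conjunct1[OF omod_om[OF Qm KL \<phi>]] E_in[OF KL(2) sfix]] by simp
  qed
  also have "\<dots> = om Q \<phi> K L (\<Sum>s\<in>T. zsc (c s) (E L s))"
    using E_in[OF KL(2)] Tfix zsc_closed[OF omod_closed[OF Qm KL(2)]]
    by (intro addhom_sum[OF omod_closed[OF Qm KL(2)] conjunct1[OF omod_om[OF Qm KL \<phi>]], symmetric]) auto
  also have "\<dots> = om Q \<phi> K L (Fr L c)" unfolding Fr_def T_def ..
  finally show ?thesis using c2eq by simp
qed

lemma E_lift:
  assumes K: "K \<in> F" and s: "s \<in> fixpts G act S K"
  shows "p K (E K s) = U K (delta s)"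
proof -
  have sS: "s \<in> S" using s fixS by blast
  note r = rep[OF sS]
  define R where "R = stab (rep s)"
  have RF: "R \<in> F" unfolding R_def using stab_F r by blast
  have Ksub: "subgroup K G" using F_sub K by auto
  have Rsub: "subgroup R G" unfolding R_def using stab_sub r by blast
  have chG: "Gmap G K R (chi s K)" unfolding R_def by (rule chi_Gmap[OF K s])
  have dfix: "delta (rep s) \<in> free_oc G act S R" unfolding R_def by (rule delta_in[OF self_fix[OF r(1)]])
  have chK: "chi s K K = gs s <# R"
    using chi_val[OF K s one_closed] lcos_mult_one[OF subgroup.subset[OF Ksub]] r unfolding R_def by simp
  define a' where "a' = (SOME g. g \<in> carrier G \<and> chi s K K = g <# R)"
  have a': "a' \<in> carrier G" "chi s K K = a' <# R"
    using someI_ex[of "\<lambda>g. g \<in> carrier G \<and> chi s K K = g <# R"] chK r unfolding a'_def by blast+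
  have "inv a' \<otimes> gs s \<in> R" using lcos_eq_iff[OF a'(1) r(2) Rsub] a' chK by simp
  hence "act (inv a' \<otimes> gs s) (rep s) = rep s" unfolding R_def stab_def by simp
  hence "act a' (act (inv a' \<otimes> gs s) (rep s)) = act a' (rep s)" by simp
  hence a'rep: "act a' (rep s) = s" using act_mult a' r sS by (simp add: m_assoc[symmetric] act_closed act_inv')
  have fo: "free_om G act (chi s K) K R (delta (rep s)) = delta s"
  proof -
    have "free_om G act (chi s K) K R (delta (rep s)) = (\<lambda>t. \<Sum>x\<in>{x. delta (rep s) x \<noteq> 0 \<and> act a' x = t}. delta (rep s) x)"
      unfolding free_om_def Let_def a'_def ..
    also have "\<dots> = delta s"
    proof (rule ext)
      fix t
      have "{x. delta (rep s) x \<noteq> 0 \<and> act a' x = t} = (if t = s then {rep s} else {})"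
        unfolding delta_def using a'rep by auto
      thus "(\<Sum>x\<in>{x. delta (rep s) x \<noteq> 0 \<and> act a' x = t}. delta (rep s) x) = delta s t"
        by (simp add: delta_def)
    qed
    finally show ?thesis .
  qed
  have "p K (E K s) = p K (om Q (chi s K) K R (q (rep s)))" unfolding E_def R_def ..
  also have "\<dots> = om N (chi s K) K R (p R (q (rep s)))"
    by (rule hom_nat[OF ph K RF chG]) (use q_prop(1)[OF r(1)] in \<open>simp add: R_def\<close>)
  also have "\<dots> = om N (chi s K) K R (U R (delta (rep s)))" using q_prop(2)[OF r(1)] unfolding R_def by simp
  also have "\<dots> = U K (free_om G act (chi s K) K R (delta (rep s)))"
    using hom_nat[OF Uh K RF chG] dfix by simp
  also have "\<dots> = U K (delta s)" using fo by simp
  finally show ?thesis .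
qed

lemma Fr_lift:
  assumes K: "K \<in> F" and c: "c \<in> free_oc G act S K"
  shows "p K (Fr K c) = U K c"
proof -
  define T where "T = {s. c s \<noteq> 0}"
  have fT: "finite T" and Tfix: "T \<subseteq> fixpts G act S K" using c unfolding T_def free_oc_def by auto
  have Qc: "addclosed (oc Q K)" using omod_closed[OF Qm K] .
  have Fc: "addclosed (free_oc G act S K)" by (rule free_oc_closed)
  have "p K (Fr K c) = (\<Sum>s\<in>T. p K (zsc (c s) (E K s)))"
    unfolding Fr_def T_def[symmetric]
    by (rule addhom_sum[OF Qc hom_add[OF ph K]]) (use Tfix E_in[OF K] zsc_closed[OF Qc] in auto)
  also have "\<dots> = (\<Sum>s\<in>T. U K (zsc (c s) (delta s)))"
  proof (rule sum.cong[OF refl])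
    fix s assume "s \<in> T" hence sf: "s \<in> fixpts G act S K" using Tfix by auto
    have "p K (zsc (c s) (E K s)) = zsc (c s) (p K (E K s))"
      by (rule addhom_zsc[OF Qc hom_add[OF ph K] E_in[OF K sf]])
    also have "\<dots> = zsc (c s) (U K (delta s))" using E_lift[OF K sf] by simp
    also have "\<dots> = U K (zsc (c s) (delta s))"
      using addhom_zsc[OF Fc _ delta_in[OF sf], of "U K"] hom_add[OF Uh K] by simp
    finally show "p K (zsc (c s) (E K s)) = U K (zsc (c s) (delta s))" .
  qed
  also have "\<dots> = U K (\<Sum>s\<in>T. zsc (c s) (delta s))"
    using hom_add[OF Uh K] Tfix
    by (intro addhom_sum[OF Fc, symmetric]) (auto intro!: zsc_closed[OF Fc] delta_in)
  also have "(\<Sum>s\<in>T. zsc (c s) (delta s)) = c"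
  proof (rule ext)
    fix t
    have "(\<Sum>s\<in>T. zsc (c s) (delta s)) t = (\<Sum>s\<in>T. c s * delta s t)"
      unfolding sum_fun_apply zsc_fun ..
    also have "\<dots> = (\<Sum>s\<in>T. if s = t then c s else 0)" by (intro sum.cong) (auto simp: delta_def)
    also have "\<dots> = c t" using fT unfolding T_def by (simp add: sum.delta)
    finally show "(\<Sum>s\<in>T. zsc (c s) (delta s)) t = c t" .
  qed
  finally show ?thesis .
qed

lemma Fr_hom: "is_hom G F (free_mod G act S) Q Fr"
  unfolding is_hom_def using Fr_in Fr_add Fr_nat by simp

end


lemma hom_comp: "is_hom G F M1 M2 f \<Longrightarrow> is_hom G F M2 M3 g \<Longrightarrow> is_hom G F M1 M3 (\<lambda>K x. g K (f K x))"
  unfolding is_hom_def by auto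

lemma hom_id: "is_hom G F M M (\<lambda>K x. x)" unfolding is_hom_def by auto

lemma hom_diff: assumes "is_omod G F N" "is_hom G F M N f" "is_hom G F M N g"
  shows "is_hom G F M N (\<lambda>K x. f K x - g K x)"
proof -
  have in1: "\<forall>K\<in>F. \<forall>x\<in>oc M K. f K x - g K x \<in> oc N K"
    using assms hom_in omod_closed addclosed_diff by metis
  have ad: "\<forall>K\<in>F. \<forall>x\<in>oc M K. \<forall>y\<in>oc M K. f K (x + y) - g K (x + y) = (f K x - g K x) + (f K y - g K y)"
    using assms(2,3) unfolding is_hom_def by (simp add: algebra_simps)
  have nat: "f K (om M \<phi> K L x) - g K (om M \<phi> K L x) = om N \<phi> K L (f L x - g L x)"
    if "K \<in> F" "L \<in> F" "Gmap G K L \<phi>" "x \<in> oc M L" for K L \<phi> x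
  proof -
    have "om N \<phi> K L (f L x - g L x) = om N \<phi> K L (f L x) - om N \<phi> K L (g L x)"
      using addhom_diff[OF omod_closed[OF assms(1) that(2)] conjunct1[OF omod_om[OF assms(1) that(1,2,3)]]]
        hom_in[OF assms(2) that(2,4)] hom_in[OF assms(3) that(2,4)] by simp
    thus ?thesis using hom_nat[OF assms(2) that] hom_nat[OF assms(3) that] by simp
  qed
  show ?thesis unfolding is_hom_def using in1 ad nat by blast
qed

lemma proj_lift:
  fixes G :: "('a, 'z) monoid_scheme" and M :: "('a, 'm::ab_group_add) omod"
  assumes g: "group G" and fam: "family G F" and Mp: "projective G F M"
    and Qm: "is_omod G F Q" and ph: "is_hom G F Q N p" and uh: "is_hom G F M N u"
    and img: "\<forall>K\<in>F. u K ` oc M K \<subseteq> p K ` oc Q K"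
  shows "\<exists>f. is_hom G F M Q f \<and> (\<forall>K\<in>F. \<forall>x\<in>oc M K. p K (f K x) = u K x)"
proof -
  obtain S :: "('a set \<times> 'a set \<times> 'm) set" and act i r where S: "Gset G act S" "isotropy_in G F act S"
    and ih: "is_hom G F M (free_mod G act S) i" and rh: "is_hom G F (free_mod G act S) M r"
    and ri: "\<forall>K\<in>F. \<forall>x\<in>oc M K. r K (i K x) = x"
    using Mp unfolding projective_def by auto
  define U where "U = (\<lambda>K x. u K (r K x))"
  have Uh: "is_hom G F (free_mod G act S) N U" unfolding U_def by (rule hom_comp[OF rh uh])
  have Uimg: "\<forall>K\<in>F. U K ` free_oc G act S K \<subseteq> p K ` oc Q K"
    using img hom_in[OF rh] unfolding U_def by fastforce
  interpret fl: freelift G F act S Q N p U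
    by (intro freelift.intro gctx.intro freelift_axioms.intro gctx_axioms.intro) (use g fam S Qm ph Uh Uimg in auto)
  define f where "f = (\<lambda>K x. fl.Fr K (i K x))"
  have "is_hom G F M Q f" unfolding f_def by (rule hom_comp[OF ih fl.Fr_hom])
  moreover have "\<forall>K\<in>F. \<forall>x\<in>oc M K. p K (f K x) = u K x"
    using fl.Fr_lift hom_in[OF ih] ri unfolding f_def U_def by simp
  ultimately show ?thesis by blast
qed

definition rho where "rho G h = restrict (\<lambda>c. c #>\<^bsub>G\<^esub> h) (lcos G {\<one>\<^bsub>G\<^esub>})"

lemma (in group) rho_Gmap: assumes "h \<in> carrier G" shows "Gmap G {\<one>} {\<one>} (rho G h)"
proof -
  have lc: "x <# {\<one>} = {x}" if "x \<in> carrier G" for x using that unfolding l_coset_def by simp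
  have L: "lcos G {\<one>} = (\<lambda>x. {x}) ` carrier G" unfolding lcos_def using lc by auto
  have rv: "rho G h {x} = {x \<otimes> h}" if "x \<in> carrier G" for x
    using that L unfolding rho_def r_coset_def by auto
  have "rho G h \<in> lcos G {\<one>} \<rightarrow>\<^sub>E lcos G {\<one>}"
    using rv assms L unfolding rho_def by (auto simp: L)
  moreover have "rho G h (g <# C) = g <# rho G h C" if gC: "g \<in> carrier G" "C \<in> lcos G {\<one>}" for g C
  proof -
    obtain x where x: "x \<in> carrier G" "C = {x}" using gC L by auto
    have "g <# C = {g \<otimes> x}" using x gC unfolding l_coset_def by simp
    thus ?thesis using rv x gC assms unfolding l_coset_def by (simp add: m_assoc)
  qed
  ultimately show ?thesis unfolding Gmap_def by blast
qed

lemma gact_rho: "gact G M h = om M (rho G h) {\<one>\<^bsub>G\<^esub>} {\<one>\<^bsub>G\<^esub>}"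
  unfolding gact_def rho_def ..

lemma gact_hom: assumes "group G" "is_hom G F M M' f" "{\<one>\<^bsub>G\<^esub>} \<in> F" "h \<in> carrier G" "x \<in> oc M {\<one>\<^bsub>G\<^esub>}"
  shows "f {\<one>\<^bsub>G\<^esub>} (gact G M h x) = gact G M' h (f {\<one>\<^bsub>G\<^esub>} x)"
  unfolding gact_rho using hom_nat[OF assms(2,3,3) group.rho_Gmap[OF assms(1,4)] assms(5)] .

lemma gact_add: assumes "group G" "is_omod G F M" "{\<one>\<^bsub>G\<^esub>} \<in> F" "h \<in> carrier G"
  shows "addhom (oc M {\<one>\<^bsub>G\<^esub>}) (gact G M h)" "\<forall>x\<in>oc M {\<one>\<^bsub>G\<^esub>}. gact G M h x \<in> oc M {\<one>\<^bsub>G\<^esub>}"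
  unfolding gact_rho using omod_om[OF assms(2,3,3) group.rho_Gmap[OF assms(1,4)]] by auto



lemma res_facts:
  assumes "FP2_res G F P d eps"
  shows "\<And>n. is_omod G F (P n)" "\<And>n. projective G F (P n)"
    "is_hom G F (P 1) (P 0) (d 0)" "is_hom G F (P 2) (P 1) (d 1)"
    "is_hom G F (P 0) (Zmod G) eps" "\<forall>K\<in>F. eps K ` oc (P 0) K = oc (Zmod G) K"
    "\<forall>K\<in>F. {x\<in>oc (P 0) K. eps K x = 0} = d 0 K ` oc (P 1) K"
    "\<forall>K\<in>F. {x\<in>oc (P 1) K. d 0 K x = 0} = d 1 K ` oc (P 2) K"
proof -
  have pr: "proj_res G F P d eps" using assms unfolding FP2_res_def by (rule conjunct1)
  have c1: "\<forall>n. is_omod G F (P n) \<and> projective G F (P n)"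
   and c2: "\<forall>n. is_hom G F (P (Suc n)) (P n) (d n)"
   and c3: "is_hom G F (P 0) (Zmod G) eps"
   and c4: "\<forall>K\<in>F. eps K ` oc (P 0) K = oc (Zmod G) K"
   and c5: "exact_at F (oc (P 0)) (d 0) (oc (P 1)) eps"
   and c6: "\<forall>n. exact_at F (oc (P (Suc n))) (d (Suc n)) (oc (P (Suc (Suc n)))) (d n)"
    using pr unfolding proj_res_def by blast+
  show "\<And>n. is_omod G F (P n)" "\<And>n. projective G F (P n)" using c1 by blast+
  show "is_hom G F (P 1) (P 0) (d 0)" using spec[OF c2, of 0] by simp
  show "is_hom G F (P 2) (P 1) (d 1)" using spec[OF c2, of 1] by (simp add: numeral_2_eq_2)
  show "is_hom G F (P 0) (Zmod G) eps" "\<forall>K\<in>F. eps K ` oc (P 0) K = oc (Zmod G) K" by (fact c3, fact c4)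
  show "\<forall>K\<in>F. {x\<in>oc (P 0) K. eps K x = 0} = d 0 K ` oc (P 1) K" using c5 unfolding exact_at_def .
  have "exact_at F (oc (P (Suc 0))) (d (Suc 0)) (oc (P (Suc (Suc 0)))) (d 0)" using spec[OF c6, of 0] .
  thus "\<forall>K\<in>F. {x\<in>oc (P 1) K. d 0 K x = 0} = d 1 K ` oc (P 2) K"
    unfolding exact_at_def numeral_2_eq_2 One_nat_def .
qed

lemma lift01:
  fixes G :: "('a, 'z) monoid_scheme" and P :: "nat \<Rightarrow> ('a, 'm::ab_group_add) omod"
    and Q :: "nat \<Rightarrow> ('a, 'n::ab_group_add) omod"
  assumes g: "group G" and fam: "family G F" and FP: "FP2_res G F P d eps" and FQ: "FP2_res G F Q d' eps'"
  shows "\<exists>f0 f1. is_hom G F (P 0) (Q 0) f0 \<and> (\<forall>K\<in>F. \<forall>x\<in>oc (P 0) K. eps' K (f0 K x) = eps K x)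
     \<and> is_hom G F (P 1) (Q 1) f1 \<and> (\<forall>K\<in>F. \<forall>x\<in>oc (P 1) K. d' 0 K (f1 K x) = f0 K (d 0 K x))"
proof -
  note P = res_facts[OF FP] and Q = res_facts[OF FQ]
  obtain f0 where f0: "is_hom G F (P 0) (Q 0) f0" "\<forall>K\<in>F. \<forall>x\<in>oc (P 0) K. eps' K (f0 K x) = eps K x"
    using proj_lift[OF g fam P(2) Q(1) Q(5) P(5)] P(5) Q(6) hom_in by blast
  have img: "\<forall>K\<in>F. (\<lambda>K x. f0 K (d 0 K x)) K ` oc (P 1) K \<subseteq> d' 0 K ` oc (Q 1) K"
  proof (intro ballI subsetI)
    fix K y assume K: "K \<in> F" and "y \<in> (\<lambda>K x. f0 K (d 0 K x)) K ` oc (P 1) K"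
    then obtain x where x: "x \<in> oc (P 1) K" "y = f0 K (d 0 K x)" by auto
    have dx: "d 0 K x \<in> oc (P 0) K" "eps K (d 0 K x) = 0" using P(7) K x by auto
    have "y \<in> oc (Q 0) K" "eps' K y = 0" using hom_in[OF f0(1) K dx(1)] f0(2) K dx x by auto
    thus "y \<in> d' 0 K ` oc (Q 1) K" using Q(7) K by blast
  qed
  obtain f1 where f1: "is_hom G F (P 1) (Q 1) f1" "\<forall>K\<in>F. \<forall>x\<in>oc (P 1) K. d' 0 K (f1 K x) = f0 K (d 0 K x)"
    using proj_lift[OF g fam P(2) Q(1) Q(3) hom_comp[OF P(3) f0(1)] img] by blast
  show ?thesis using f0 f1 by blast
qed

lemma lifth:
  fixes G :: "('a, 'z) monoid_scheme" and P :: "nat \<Rightarrow> ('a, 'm::ab_group_add) omod"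
  assumes g: "group G" and fam: "family G F" and FP: "FP2_res G F P d eps"
    and w: "is_hom G F (P 0) (P 0) w" "\<forall>K\<in>F. \<forall>x\<in>oc (P 0) K. eps K (w K x) = eps K x"
  shows "\<exists>h. is_hom G F (P 0) (P 1) h \<and> (\<forall>K\<in>F. \<forall>x\<in>oc (P 0) K. d 0 K (h K x) = w K x - x)"
proof -
  note P = res_facts[OF FP]
  have uh: "is_hom G F (P 0) (P 0) (\<lambda>K x. w K x - x)" by (rule hom_diff[OF P(1) w(1) hom_id])
  have img: "\<forall>K\<in>F. (\<lambda>K x. w K x - x) K ` oc (P 0) K \<subseteq> d 0 K ` oc (P 1) K"
  proof (intro ballI subsetI)
    fix K y assume K: "K \<in> F" and "y \<in> (\<lambda>K x. w K x - x) K ` oc (P 0) K"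
    then obtain x where x: "x \<in> oc (P 0) K" "y = w K x - x" by auto
    have yin: "y \<in> oc (P 0) K" using hom_in[OF uh K x(1)] x by simp
    have "eps K y = eps K (w K x) - eps K x"
      using addhom_diff[OF omod_closed[OF P(1) K] hom_add[OF P(5) K] hom_in[OF w(1) K x(1)] x(1)] x by simp
    hence "eps K y = 0" using w(2) K x by simp
    thus "y \<in> d 0 K ` oc (P 1) K" using P(7) K yin by blast
  qed
  show ?thesis using proj_lift[OF g fam P(2) P(1) P(3) uh img] by blast
qed



lemma one_in_F: assumes "group G" "family G F" shows "{\<one>\<^bsub>G\<^esub>} \<in> F"
proof -
  obtain H where H: "H \<in> F" using assms(2) unfolding family_def by auto
  have "subgroup H G" using H assms(2) unfolding family_def by auto
  hence "{\<one>\<^bsub>G\<^esub>} \<subseteq> H" using subgroup.one_closed by blast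
  moreover have "subgroup {\<one>\<^bsub>G\<^esub>} G" using group.triv_subgroup[OF assms(1)] .
  ultimately show ?thesis using H assms(2) unfolding family_def by blast
qed

lemma one_dir:
  fixes G :: "('a, 'z) monoid_scheme" and F :: "'a set set"
    and P :: "nat \<Rightarrow> ('a, 'm::ab_group_add) omod" and d :: "nat \<Rightarrow> 'a set \<Rightarrow> 'm \<Rightarrow> 'm"
    and eps :: "'a set \<Rightarrow> 'm \<Rightarrow> ('a set \<Rightarrow> int)"
    and B1 :: "'b1 set" and \<eta>1 :: "('a \<times> 'b1 \<Rightarrow> int) \<Rightarrow> 'm"
    and B2 :: "'b2 set" and \<eta>2 :: "('a \<times> 'b2 \<Rightarrow> int) \<Rightarrow> 'm"
    and Q :: "nat \<Rightarrow> ('a, 'n::ab_group_add) omod" and d' :: "nat \<Rightarrow> 'a set \<Rightarrow> 'n \<Rightarrow> 'n"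
    and eps' :: "'a set \<Rightarrow> 'n \<Rightarrow> ('a set \<Rightarrow> int)"
    and C1 :: "'c1 set" and \<theta>1 :: "('a \<times> 'c1 \<Rightarrow> int) \<Rightarrow> 'n"
    and C2 :: "'c2 set" and \<theta>2 :: "('a \<times> 'c2 \<Rightarrow> int) \<Rightarrow> 'n"
  assumes g: "group G" and fam: "family G F"
    and FP: "FP2_res G F P d eps"
    and fP1: "filling_map G B1 (oc (P 1) {\<one>\<^bsub>G\<^esub>}) (gact G (P 1)) \<eta>1"
    and fP2: "filling_map G B2 (oc (P 2) {\<one>\<^bsub>G\<^esub>}) (gact G (P 2)) \<eta>2"
    and FQ: "FP2_res G F Q d' eps'"
    and fQ1: "filling_map G C1 (oc (Q 1) {\<one>\<^bsub>G\<^esub>}) (gact G (Q 1)) \<theta>1"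
    and fQ2: "filling_map G C2 (oc (Q 2) {\<one>\<^bsub>G\<^esub>}) (gact G (Q 2)) \<theta>2"
  shows "preceq (FV G P d B1 \<eta>1 B2 \<eta>2) (FV G Q d' C1 \<theta>1 C2 \<theta>2)"
proof -
  let ?I = "{\<one>\<^bsub>G\<^esub>}"
  have IF: "?I \<in> F" by (rule one_in_F[OF g fam])
  note P = res_facts[OF FP] and Q = res_facts[OF FQ]
  obtain f0 f1 where f0: "is_hom G F (P 0) (Q 0) f0" "\<forall>K\<in>F. \<forall>x\<in>oc (P 0) K. eps' K (f0 K x) = eps K x"
     and f1: "is_hom G F (P 1) (Q 1) f1" "\<forall>K\<in>F. \<forall>x\<in>oc (P 1) K. d' 0 K (f1 K x) = f0 K (d 0 K x)"
    using lift01[OF g fam FP FQ] by blast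
  obtain g0 g1 where g0: "is_hom G F (Q 0) (P 0) g0" "\<forall>K\<in>F. \<forall>x\<in>oc (Q 0) K. eps K (g0 K x) = eps' K x"
     and g1: "is_hom G F (Q 1) (P 1) g1" "\<forall>K\<in>F. \<forall>x\<in>oc (Q 1) K. d 0 K (g1 K x) = g0 K (d' 0 K x)"
    using lift01[OF g fam FQ FP] by blast
  have wh: "is_hom G F (P 0) (P 0) (\<lambda>K x. g0 K (f0 K x))" by (rule hom_comp[OF f0(1) g0(1)])
  have we: "\<forall>K\<in>F. \<forall>x\<in>oc (P 0) K. eps K (g0 K (f0 K x)) = eps K x"
    using f0 g0 hom_in[OF f0(1)] by simp
  obtain h0 where h0: "is_hom G F (P 0) (P 1) h0" "\<forall>K\<in>F. \<forall>x\<in>oc (P 0) K. d 0 K (h0 K x) = g0 K (f0 K x) - x"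
    using lifth[OF g fam FP wh we] by blast
  obtain K1 where K1: "\<forall>x\<in>oc (P 1) ?I. \<exists>y\<in>oc (Q 1) ?I. y = f1 ?I x \<and> fill_norm G C1 \<theta>1 y \<le> K1 * fill_norm G B1 \<eta>1 x"
  proof -
    have "addhom (oc (Q 1) ?I) (\<lambda>y. y)" unfolding addhom_def by simp
    moreover have "\<forall>h\<in>carrier G. \<forall>x\<in>oc (P 1) ?I. f1 ?I (gact G (P 1) h x) = gact G (Q 1) h (f1 ?I x)"
      using gact_hom[OF g f1(1) IF] by blast
    moreover have "f1 ?I ` oc (P 1) ?I \<subseteq> (\<lambda>y. y) ` oc (Q 1) ?I" using hom_in[OF f1(1) IF] by auto
    ultimately have "\<exists>K. \<forall>x\<in>oc (P 1) ?I. \<exists>y\<in>oc (Q 1) ?I. y = f1 ?I x \<and> fill_norm G C1 \<theta>1 y \<le> K * fill_norm G B1 \<eta>1 x"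
      using LIP[OF g fP1 fQ1 hom_add[OF f1(1) IF], of "\<lambda>y. y" "gact G (Q 1)"] by simp
    thus ?thesis using that by blast
  qed
  define \<Phi> where "\<Phi> = (\<lambda>K \<nu>. g1 K (d' 1 K \<nu>))"
  have \<Phi>h: "is_hom G F (Q 2) (P 1) \<Phi>" unfolding \<Phi>_def by (rule hom_comp[OF Q(4) g1(1)])
  have d1eq: "\<forall>h\<in>carrier G. \<forall>y\<in>oc (P 2) ?I. d 1 ?I (gact G (P 2) h y) = gact G (P 1) h (d 1 ?I y)"
    using gact_hom[OF g P(4) IF] by blast
  obtain K2 where K2: "\<forall>x\<in>oc (Q 2) ?I. \<exists>y\<in>oc (P 2) ?I. d 1 ?I y = \<Phi> ?I x \<and> fill_norm G B2 \<eta>2 y \<le> K2 * fill_norm G C2 \<theta>2 x"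
  proof -
    have "\<forall>h\<in>carrier G. \<forall>x\<in>oc (Q 2) ?I. \<Phi> ?I (gact G (Q 2) h x) = gact G (P 1) h (\<Phi> ?I x)"
      using gact_hom[OF g \<Phi>h IF] by blast
    moreover have "\<Phi> ?I ` oc (Q 2) ?I \<subseteq> d 1 ?I ` oc (P 2) ?I"
    proof
      fix y assume "y \<in> \<Phi> ?I ` oc (Q 2) ?I"
      then obtain \<nu> where \<nu>: "\<nu> \<in> oc (Q 2) ?I" "y = g1 ?I (d' 1 ?I \<nu>)" unfolding \<Phi>_def by auto
      have z: "d' 1 ?I \<nu> \<in> oc (Q 1) ?I" "d' 0 ?I (d' 1 ?I \<nu>) = 0" using Q(8) IF \<nu>(1) by auto
      have "g0 ?I 0 = 0" by (rule addhom_0[OF omod_closed[OF Q(1) IF] hom_add[OF g0(1) IF]])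
      hence "d 0 ?I y = 0" using g1(2) IF z \<nu>(2) by simp
      moreover have "y \<in> oc (P 1) ?I" using hom_in[OF g1(1) IF z(1)] \<nu> by simp
      ultimately show "y \<in> d 1 ?I ` oc (P 2) ?I" using P(8) IF by blast
    qed
    ultimately show ?thesis using that LIP[OF g fQ2 fP2 hom_add[OF \<Phi>h IF] hom_add[OF P(4) IF], of "gact G (P 1)"] d1eq by auto
  qed
  define V where "V = (\<lambda>K x. (g1 K (f1 K x) - x) - h0 K (d 0 K x))"
  have Vh: "is_hom G F (P 1) (P 1) V" unfolding V_def
    by (intro hom_diff[OF P(1)] hom_comp[OF f1(1) g1(1)] hom_id hom_comp[OF P(3) h0(1)])
  obtain K3 where K3: "\<forall>x\<in>oc (P 1) ?I. \<exists>y\<in>oc (P 2) ?I. d 1 ?I y = V ?I x \<and> fill_norm G B2 \<eta>2 y \<le> K3 * fill_norm G B1 \<eta>1 x"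
  proof -
    have "\<forall>h\<in>carrier G. \<forall>x\<in>oc (P 1) ?I. V ?I (gact G (P 1) h x) = gact G (P 1) h (V ?I x)"
      using gact_hom[OF g Vh IF] by blast
    moreover have "V ?I ` oc (P 1) ?I \<subseteq> d 1 ?I ` oc (P 2) ?I"
    proof
      fix y assume "y \<in> V ?I ` oc (P 1) ?I"
      then obtain x where x: "x \<in> oc (P 1) ?I" "y = V ?I x" by auto
      have cl0: "addclosed (oc (P 0) ?I)" and cl1: "addclosed (oc (P 1) ?I)" using omod_closed[OF P(1) IF] by auto
      have dx: "d 0 ?I x \<in> oc (P 0) ?I" using hom_in[OF P(3) IF x(1)] .
      have a: "g1 ?I (f1 ?I x) \<in> oc (P 1) ?I" using hom_in[OF g1(1) IF hom_in[OF f1(1) IF x(1)]] .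
      have b: "h0 ?I (d 0 ?I x) \<in> oc (P 1) ?I" using hom_in[OF h0(1) IF dx] .
      have ax: "g1 ?I (f1 ?I x) - x \<in> oc (P 1) ?I" using addclosed_diff[OF cl1 a x(1)] .
      have "d 0 ?I y = (d 0 ?I (g1 ?I (f1 ?I x)) - d 0 ?I x) - d 0 ?I (h0 ?I (d 0 ?I x))"
        unfolding x(2) V_def
        using addhom_diff[OF cl1 hom_add[OF P(3) IF] ax b] addhom_diff[OF cl1 hom_add[OF P(3) IF] a x(1)] by simp
      also have "d 0 ?I (g1 ?I (f1 ?I x)) = g0 ?I (f0 ?I (d 0 ?I x))"
        using g1(2) f1(2) IF hom_in[OF f1(1) IF x(1)] x(1) by simp
      also have "d 0 ?I (h0 ?I (d 0 ?I x)) = g0 ?I (f0 ?I (d 0 ?I x)) - d 0 ?I x" using h0(2) IF dx by simp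
      finally have "d 0 ?I y = 0" by simp
      moreover have "y \<in> oc (P 1) ?I" using hom_in[OF Vh IF x(1)] x by simp
      ultimately show "y \<in> d 1 ?I ` oc (P 2) ?I" using P(8) IF by blast
    qed
    ultimately show ?thesis using that LIP[OF g fP1 fP2 hom_add[OF Vh IF] hom_add[OF P(4) IF], of "gact G (P 1)"] d1eq by auto
  qed
  define C where "C = K1 + K2 + K3 + 1"
  interpret FP2: fillm G B2 "oc (P 2) ?I" "gact G (P 2)" \<eta>2
    by (rule fillm.intro[OF g]) (unfold fillm_axioms_def, fact fP2)
  have bound: "enat (LEAST m. \<exists>\<mu>\<in>oc (P 2) ?I. d 1 ?I \<mu> = \<gamma> \<and> fill_norm G B2 \<eta>2 \<mu> = m)
      \<le> enat C * FV G Q d' C1 \<theta>1 C2 \<theta>2 (C * n + C) + enat (C * n + C)"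
    if \<gamma>: "\<gamma> \<in> oc (P 1) ?I" "d 0 ?I \<gamma> = 0" "fill_norm G B1 \<eta>1 \<gamma> \<le> n" for \<gamma> n
  proof -
    obtain y where y: "y \<in> oc (Q 1) ?I" "y = f1 ?I \<gamma>" "fill_norm G C1 \<theta>1 y \<le> K1 * fill_norm G B1 \<eta>1 \<gamma>"
      using K1 \<gamma>(1) by blast
    have "f0 ?I 0 = 0" by (rule addhom_0[OF omod_closed[OF P(1) IF] hom_add[OF f0(1) IF]])
    hence yk: "d' 0 ?I y = 0" using f1(2) IF \<gamma> y(2) by simp
    have "K1 * fill_norm G B1 \<eta>1 \<gamma> \<le> K1 * n" using \<gamma>(3) by simp
    also have "\<dots> \<le> C * n + C" unfolding C_def by (simp add: add_mult_distrib)
    finally have yn: "fill_norm G C1 \<theta>1 y \<le> C * n + C" using y(3) by linarith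
    have "y \<in> d' 1 ?I ` oc (Q 2) ?I" using Q(8) IF y(1) yk by blast
    then obtain \<nu>0 where "\<nu>0 \<in> oc (Q 2) ?I" "d' 1 ?I \<nu>0 = y" by auto
    define m where "m = (LEAST m. \<exists>\<nu>\<in>oc (Q 2) ?I. d' 1 ?I \<nu> = y \<and> fill_norm G C2 \<theta>2 \<nu> = m)"
    have "\<exists>\<nu>\<in>oc (Q 2) ?I. d' 1 ?I \<nu> = y \<and> fill_norm G C2 \<theta>2 \<nu> = m"
      unfolding m_def by (rule LeastI_ex) (use \<open>\<nu>0 \<in> oc (Q 2) ?I\<close> \<open>d' 1 ?I \<nu>0 = y\<close> in blast)
    then obtain \<nu> where \<nu>: "\<nu> \<in> oc (Q 2) ?I" "d' 1 ?I \<nu> = y" "fill_norm G C2 \<theta>2 \<nu> = m" by blast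
    have mFV: "enat m \<le> FV G Q d' C1 \<theta>1 C2 \<theta>2 (C * n + C)"
      unfolding FV_def m_def by (rule SUP_upper) (use y(1) yk yn in blast)
    obtain \<mu>1 where \<mu>1: "\<mu>1 \<in> oc (P 2) ?I" "d 1 ?I \<mu>1 = g1 ?I y" "fill_norm G B2 \<eta>2 \<mu>1 \<le> K2 * m"
      using K2 \<nu> unfolding \<Phi>_def by blast
    obtain \<mu>2 where \<mu>2: "\<mu>2 \<in> oc (P 2) ?I" "d 1 ?I \<mu>2 = V ?I \<gamma>" "fill_norm G B2 \<eta>2 \<mu>2 \<le> K3 * fill_norm G B1 \<eta>1 \<gamma>"
      using K3 \<gamma>(1) by blast
    have "h0 ?I 0 = 0" by (rule addhom_0[OF omod_closed[OF P(1) IF] hom_add[OF h0(1) IF]])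
    hence V\<gamma>: "V ?I \<gamma> = g1 ?I y - \<gamma>" unfolding V_def using \<gamma>(2) y(2) by simp
    define \<mu> where "\<mu> = \<mu>1 + - \<mu>2"
    have m2: "- \<mu>2 \<in> oc (P 2) ?I" using FP2.A_neg(1)[OF \<mu>2(1)] .
    have \<mu>in: "\<mu> \<in> oc (P 2) ?I" unfolding \<mu>_def using FP2.A_add(1)[OF \<mu>1(1) m2] .
    have "d 1 ?I \<mu> = d 1 ?I \<mu>1 - d 1 ?I \<mu>2"
      unfolding \<mu>_def using addhom_diff[OF omod_closed[OF P(1) IF] hom_add[OF P(4) IF] \<mu>1(1) \<mu>2(1)] by simp
    hence d\<mu>: "d 1 ?I \<mu> = \<gamma>" using \<mu>1(2) \<mu>2(2) V\<gamma> by simp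
    have "fill_norm G B2 \<eta>2 \<mu> \<le> fill_norm G B2 \<eta>2 \<mu>1 + fill_norm G B2 \<eta>2 (- \<mu>2)"
      unfolding \<mu>_def by (rule FP2.A_add(2)[OF \<mu>1(1) m2])
    also have "\<dots> \<le> K2 * m + K3 * n"
      using \<mu>1(3) \<mu>2(3) FP2.A_neg(2)[OF \<mu>2(1)] \<gamma>(3) mult_le_mono2[of "fill_norm G B1 \<eta>1 \<gamma>" n K3] by linarith
    finally have \<mu>n: "fill_norm G B2 \<eta>2 \<mu> \<le> K2 * m + K3 * n" .
    have "(LEAST m. \<exists>\<mu>\<in>oc (P 2) ?I. d 1 ?I \<mu> = \<gamma> \<and> fill_norm G B2 \<eta>2 \<mu> = m) \<le> fill_norm G B2 \<eta>2 \<mu>"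
      by (rule Least_le) (use \<mu>in d\<mu> in blast)
    also have "\<dots> \<le> C * m + (C * n + C)"
    proof -
      have "K2 \<le> C" "K3 \<le> C" unfolding C_def by simp_all
      hence "K2 * m \<le> C * m" "K3 * n \<le> C * n" using mult_le_mono1 by blast+
      thus ?thesis using \<mu>n by linarith
    qed
    finally have "enat (LEAST m. \<exists>\<mu>\<in>oc (P 2) ?I. d 1 ?I \<mu> = \<gamma> \<and> fill_norm G B2 \<eta>2 \<mu> = m)
        \<le> enat C * enat m + enat (C * n + C)" by simp
    also have "\<dots> \<le> enat C * FV G Q d' C1 \<theta>1 C2 \<theta>2 (C * n + C) + enat (C * n + C)"
      by (intro add_right_mono mult_left_mono mFV) simp
    finally show ?thesis .
  qed
  show ?thesis unfolding preceq_def
  proof (intro exI conjI allI)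
    show "0 < C" unfolding C_def by simp
    fix n
    show "FV G P d B1 \<eta>1 B2 \<eta>2 n \<le> enat C * FV G Q d' C1 \<theta>1 C2 \<theta>2 (C * n + C) + enat (C * n + C)"
      unfolding FV_def[of G P] by (rule SUP_least) (use bound in blast)
  qed
qed


theorem mainTheorem9:
  fixes G :: "('a, 'z) monoid_scheme" and F :: "'a set set"
    and P :: "nat \<Rightarrow> ('a, 'm::ab_group_add) omod" and d :: "nat \<Rightarrow> 'a set \<Rightarrow> 'm \<Rightarrow> 'm"
    and eps :: "'a set \<Rightarrow> 'm \<Rightarrow> ('a set \<Rightarrow> int)"
    and B1 :: "'b1 set" and \<eta>1 :: "('a \<times> 'b1 \<Rightarrow> int) \<Rightarrow> 'm"
    and B2 :: "'b2 set" and \<eta>2 :: "('a \<times> 'b2 \<Rightarrow> int) \<Rightarrow> 'm"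
    and Q :: "nat \<Rightarrow> ('a, 'n::ab_group_add) omod" and d' :: "nat \<Rightarrow> 'a set \<Rightarrow> 'n \<Rightarrow> 'n"
    and eps' :: "'a set \<Rightarrow> 'n \<Rightarrow> ('a set \<Rightarrow> int)"
    and C1 :: "'c1 set" and \<theta>1 :: "('a \<times> 'c1 \<Rightarrow> int) \<Rightarrow> 'n"
    and C2 :: "'c2 set" and \<theta>2 :: "('a \<times> 'c2 \<Rightarrow> int) \<Rightarrow> 'n"
  assumes "group G" and "family G F"
    and "FP2_res G F P d eps"
    and "filling_map G B1 (oc (P 1) {\<one>\<^bsub>G\<^esub>}) (gact G (P 1)) \<eta>1"
    and "filling_map G B2 (oc (P 2) {\<one>\<^bsub>G\<^esub>}) (gact G (P 2)) \<eta>2"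
    and "FP2_res G F Q d' eps'"
    and "filling_map G C1 (oc (Q 1) {\<one>\<^bsub>G\<^esub>}) (gact G (Q 1)) \<theta>1"
    and "filling_map G C2 (oc (Q 2) {\<one>\<^bsub>G\<^esub>}) (gact G (Q 2)) \<theta>2"
  shows "growth_equiv (FV G P d B1 \<eta>1 B2 \<eta>2) (FV G Q d' C1 \<theta>1 C2 \<theta>2)"
  unfolding growth_equiv_def
  using one_dir[OF assms(1,2,3,4,5,6,7,8)] one_dir[OF assms(1,2,6,7,8,3,4,5)] by blast

end
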